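(* Let $\Xi$ be any scale limit and $f$ be any scaling function. Then there exists a sequence of permutations which converges at scale $f$ to $\Xi$.
   Context: A scaling function is a function $f:\mathbb{N}\to\mathbb{R}^+$ with $f(n)\le n$ for all $n$, $f(n)\to\infty$ and $f(n)/n\to 0$. Let $S_n$ be the set of permutations of $[n]=\{1,\dots,n\}$ and $S=\bigcup_n S_n$. An occurrence of a pattern $\pi\in S_k$ in $\sigma\in S_n$ is a $k$-element set of indices $i_1<\dots<i_k$ such that $\sigma(i_1)\dots\sigma(i_k)$ is order-isomorphic to $\pi$; its width is $i_k-i_1+1$. For real $f\in[k,n]$, $\rho_f(\pi,\sigma)$ is the number of occurrences of $\pi$ in $\sigma$ of width at most $f$ divided by the number of $k$-element subsets of $[n]$ of width at most $f$. A sequence $(\sigma_j)$ with $|\sigma_j|\to\infty$ converges at scale $f$ to $\Xi\in[0,1]^S$ if $\rho_{f(|\sigma_j|)}(\pi,\sigma_j)\to\Xi_\pi$ for every $\pi\in S$. A scale limit is a vector $\Xi\in[0,1]^S$ such that for some scaling function $g$ there is a sequence of permutations converging at scale $g$ to $\Xi$. *)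

theory Defs
  imports "HOL-Analysis.Analysis"
begin

text \<open>A permutation of [n] = {1..n} is represented by its one-line notation,
  a list of length n whose entries are exactly 1..n (each once).
  Entry i (1-based) is sg(i) = xs ! (i - 1).\<close>

definition is_perm :: "nat list \<Rightarrow> bool" where
  "is_perm xs \<longleftrightarrow> distinct xs \<and> set xs = {1..length xs}"

definition Perms :: "nat list set" where
  "Perms = {xs. is_perm xs \<and> length xs \<ge> 1}"

definition scaling_function :: "(nat \<Rightarrow> real) \<Rightarrow> bool" where
  "scaling_function f \<longleftrightarrow>
     (\<forall>n\<ge>1. 0 < f n \<and> f n \<le> real n) \<and>
     filterlim f at_top sequentially \<and>
     ((\<lambda>n. f n / real n) \<longlonglongrightarrow> 0)"

definition width :: "nat set \<Rightarrow> nat" where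
  "width I = Max I - Min I + 1"

definition occurrence :: "nat list \<Rightarrow> nat list \<Rightarrow> nat set \<Rightarrow> bool" where
  "occurrence pat sg I \<longleftrightarrow>
     I \<subseteq> {1..length sg} \<and> card I = length pat \<and>
     (let ix = sorted_list_of_set I in
       \<forall>a<length pat. \<forall>b<length pat.
         (sg ! (ix ! a - 1) < sg ! (ix ! b - 1) \<longleftrightarrow> pat ! a < pat ! b))"

definition windowed_subsets :: "nat \<Rightarrow> nat \<Rightarrow> real \<Rightarrow> nat set set" where
  "windowed_subsets n k f = {I. I \<subseteq> {1..n} \<and> card I = k \<and> real (width I) \<le> f}"

text \<open>rho_f(pi, sg); meaningful for k <= f <= n.\<close>
definition rho :: "real \<Rightarrow> nat list \<Rightarrow> nat list \<Rightarrow> real" where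
  "rho f pat sg =
     real (card {I \<in> windowed_subsets (length sg) (length pat) f. occurrence pat sg I})
     / real (card (windowed_subsets (length sg) (length pat) f))"

definition converges_at_scale ::
  "(nat \<Rightarrow> nat list) \<Rightarrow> (nat \<Rightarrow> real) \<Rightarrow> (nat list \<Rightarrow> real) \<Rightarrow> bool" where
  "converges_at_scale seq f Xi \<longleftrightarrow>
     (\<forall>j. is_perm (seq j)) \<and>
     filterlim (\<lambda>j. length (seq j)) at_top sequentially \<and>
     (\<forall>pat\<in>Perms. ((\<lambda>j. rho (f (length (seq j))) pat (seq j)) \<longlonglongrightarrow> Xi pat))"

text \<open>Xi in [0,1]^S: a function on S with values in [0,1] (values outside S are irrelevant).\<close>
definition scale_limit :: "(nat list \<Rightarrow> real) \<Rightarrow> bool" where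
  "scale_limit Xi \<longleftrightarrow>
     (\<forall>pat\<in>Perms. 0 \<le> Xi pat \<and> Xi pat \<le> 1) \<and>
     (\<exists>g. scaling_function g \<and> (\<exists>seq. converges_at_scale seq g Xi))"

end

theory Submission
  imports Defs "HOL-Library.FuncSet"
begin


definition Cnt :: "nat \<Rightarrow> nat \<Rightarrow> nat \<Rightarrow> (nat set \<Rightarrow> bool) \<Rightarrow> nat" where
  "Cnt n k t P = card {I. I \<subseteq> {1..n} \<and> card I = k \<and> width I \<le> t \<and> P I}"

lemma finite_Cset: "finite {I. I \<subseteq> {1..(n::nat)} \<and> Q I}"
  by (rule finite_subset[of _ "Pow {1..n}"]) (blast, simp)

lemma rho_Cnt:
  assumes "0 \<le> f"
  shows "rho f pat sg = real (Cnt (length sg) (length pat) (nat \<lfloor>f\<rfloor>) (occurrence pat sg))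
     / real (Cnt (length sg) (length pat) (nat \<lfloor>f\<rfloor>) (\<lambda>_. True))"
proof -
  have e: "real w \<le> f \<longleftrightarrow> w \<le> nat \<lfloor>f\<rfloor>" for w :: nat
  proof -
    have "w \<le> nat \<lfloor>f\<rfloor> \<longleftrightarrow> int w \<le> \<lfloor>f\<rfloor>" using assms by (simp add: le_nat_iff)
    also have "\<dots> \<longleftrightarrow> real w \<le> f" by (simp add: le_floor_iff)
    finally show ?thesis by simp
  qed
  show ?thesis unfolding rho_def Cnt_def windowed_subsets_def
    by (simp add: e conj_ac)
qed

lemma width_le:
  assumes "I \<subseteq> {a..b}" "I \<noteq> {}"
  shows "width I \<le> b + 1 - a"
proof -
  have f: "finite I" using assms(1) finite_subset by blast
  have "Max I \<le> b" using assms f by (meson Max_in atLeastAtMost_iff subsetD)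
  moreover have "a \<le> Min I" using assms f by (meson Min_in atLeastAtMost_iff subsetD)
  moreover have "Min I \<le> Max I" using assms f by simp
  ultimately show ?thesis unfolding width_def by linarith
qed

lemma in_window:
  assumes "finite I" "x \<in> I" "z \<in> I" "width I \<le> t"
  shows "z \<le> x + t" "x \<le> z + t"
proof -
  have "Min I \<le> x" "x \<le> Max I" "Min I \<le> z" "z \<le> Max I" using assms by auto
  then show "z \<le> x + t" "x \<le> z + t" using assms(4) unfolding width_def by linarith+
qed

lemma card_superset_le:
  assumes "finite A" "finite X"
  shows "card {I. I \<subseteq> A \<and> card I = k \<and> X \<subseteq> I} \<le> card A choose (k - card X)"
proof -
  let ?F = "{I. I \<subseteq> A \<and> card I = k \<and> X \<subseteq> I}"
  have "inj_on (\<lambda>I. I - X) ?F" by (rule inj_onI) auto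
  moreover have "(\<lambda>I. I - X) ` ?F \<subseteq> {B. B \<subseteq> A \<and> card B = k - card X}"
  proof
    fix B assume "B \<in> (\<lambda>I. I - X) ` ?F"
    then obtain I where I: "I \<subseteq> A" "card I = k" "X \<subseteq> I" "B = I - X" by auto
    have "finite I" using I(1) assms(1) finite_subset by blast
    then have "card B = k - card X" using I card_Diff_subset assms(2) by metis
    then show "B \<in> {B. B \<subseteq> A \<and> card B = k - card X}" using I by auto
  qed
  ultimately have "card ?F \<le> card {B. B \<subseteq> A \<and> card B = k - card X}"
  proof -
    assume inj: "inj_on (\<lambda>I. I - X) ?F" and sub: "(\<lambda>I. I - X) ` ?F \<subseteq> {B. B \<subseteq> A \<and> card B = k - card X}"
    have fin: "finite {B. B \<subseteq> A \<and> card B = k - card X}"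
      by (rule finite_subset[of _ "Pow A"]) (use assms(1) in auto)
    have "card ?F = card ((\<lambda>I. I - X) ` ?F)" using card_image[OF inj] by simp
    also have "\<dots> \<le> card {B. B \<subseteq> A \<and> card B = k - card X}" by (rule card_mono[OF fin sub])
    finally show ?thesis .
  qed
  also have "\<dots> = card A choose (k - card X)" using n_subsets[OF assms(1)] .
  finally show ?thesis .
qed

lemma Cnt_le_True: "Cnt n k t P \<le> Cnt n k t (\<lambda>_. True)"
  unfolding Cnt_def by (rule card_mono[OF finite_Cset]) auto

lemma Cnt_mono_t: "t1 \<le> t2 \<Longrightarrow> Cnt n k t1 P \<le> Cnt n k t2 P"
  unfolding Cnt_def by (rule card_mono[OF finite_Cset]) auto

lemma Cnt_band:
  assumes "t1 \<le> t2"
  shows "Cnt n k t2 P + Cnt n k t1 (\<lambda>_. True) \<le> Cnt n k t1 P + Cnt n k t2 (\<lambda>_. True)"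
proof -
  let ?S = "\<lambda>t P. {I. I \<subseteq> {1..n} \<and> card I = k \<and> width I \<le> t \<and> P I}"
  have "?S t2 P \<subseteq> ?S t1 P \<union> (?S t2 (\<lambda>_. True) - ?S t1 (\<lambda>_. True))" by auto
  then have "card (?S t2 P) \<le> card (?S t1 P \<union> (?S t2 (\<lambda>_. True) - ?S t1 (\<lambda>_. True)))"
    by (intro card_mono finite_UnI finite_Diff finite_Cset)
  also have "\<dots> \<le> card (?S t1 P) + card (?S t2 (\<lambda>_. True) - ?S t1 (\<lambda>_. True))"
    by (rule card_Un_le)
  finally have "card (?S t2 P) \<le> card (?S t1 P) + card (?S t2 (\<lambda>_. True) - ?S t1 (\<lambda>_. True))" .
  moreover have "card (?S t2 (\<lambda>_. True) - ?S t1 (\<lambda>_. True)) = card (?S t2 (\<lambda>_. True)) - card (?S t1 (\<lambda>_. True))"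
    by (rule card_Diff_subset) (use assms finite_Cset in auto)
  moreover have "card (?S t1 (\<lambda>_. True)) \<le> card (?S t2 (\<lambda>_. True))"
    by (rule card_mono) (use assms finite_Cset in auto)
  ultimately show ?thesis unfolding Cnt_def by simp
qed

lemma Cnt_band_bound:
  assumes "1 \<le> t1" "t1 \<le> t2" "2 \<le> k"
  shows "Cnt n k t2 (\<lambda>_. True) \<le> Cnt n k t1 (\<lambda>_. True) + n * (t2 - t1) * (t2 choose (k-2))"
proof -
  let ?S = "\<lambda>t. {I. I \<subseteq> {1..n} \<and> card I = k \<and> width I \<le> t \<and> True}"
  let ?G = "\<lambda>a b. {I. I \<subseteq> {a..b} \<and> card I = k \<and> {a,b} \<subseteq> I}"
  have sub: "?S t2 - ?S t1 \<subseteq> (\<Union>a\<in>{1..n}. \<Union>b\<in>{a+t1..<a+t2}. ?G a b)"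
  proof
    fix I assume I: "I \<in> ?S t2 - ?S t1"
    then have fI: "finite I" and ne: "I \<noteq> {}" using assms finite_subset[of I "{1..n}"] by auto
    let ?a = "Min I" and ?b = "Max I"
    have "?a \<in> I" "?b \<in> I" using fI ne by auto
    have "I \<subseteq> {?a..?b}" using fI by auto
    have "?a \<le> ?b" using fI ne by simp
    have "?a \<in> {1..n}" using I \<open>?a \<in> I\<close> by auto
    moreover have "?b \<in> {?a+t1..<?a+t2}" using I \<open>?a \<le> ?b\<close> unfolding width_def by auto
    ultimately show "I \<in> (\<Union>a\<in>{1..n}. \<Union>b\<in>{a+t1..<a+t2}. ?G a b)"
      using I \<open>?a \<in> I\<close> \<open>?b \<in> I\<close> \<open>I \<subseteq> {?a..?b}\<close> by blast
  qed
  have G: "card (?G a b) \<le> t2 choose (k-2)" if "b \<in> {a+t1..<a+t2}" for a b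
  proof -
    have "card {a,b} = 2" using that assms by auto
    then have "card (?G a b) \<le> card {a..b} choose (k - 2)"
      using card_superset_le[of "{a..b}" "{a,b}" k] by simp
    also have "\<dots> \<le> t2 choose (k-2)" by (rule binomial_right_mono) (use that in auto)
    finally show ?thesis .
  qed
  have "card (?S t2 - ?S t1) \<le> card (\<Union>a\<in>{1..n}. \<Union>b\<in>{a+t1..<a+t2}. ?G a b)"
    by (rule card_mono[OF _ sub]) (auto intro!: finite_subset[of _ "Pow {0..n+t2}"])
  also have "\<dots> \<le> (\<Sum>a\<in>{1..n}. card (\<Union>b\<in>{a+t1..<a+t2}. ?G a b))" by (rule card_UN_le) simp
  also have "\<dots> \<le> (\<Sum>a\<in>{1..n}. \<Sum>b\<in>{a+t1..<a+t2}. card (?G a b))"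
    by (intro sum_mono card_UN_le) simp
  also have "\<dots> \<le> (\<Sum>a\<in>{1..n}. \<Sum>b\<in>{a+t1..<a+t2}. t2 choose (k-2))"
    by (intro sum_mono G)
  also have "\<dots> = n * (t2 - t1) * (t2 choose (k-2))" by simp
  finally have *: "card (?S t2 - ?S t1) \<le> n * (t2 - t1) * (t2 choose (k-2))" .
  have "card (?S t2) \<le> card (?S t1 \<union> (?S t2 - ?S t1))"
    by (intro card_mono finite_UnI finite_Diff finite_Cset) auto
  also have "\<dots> \<le> card (?S t1) + card (?S t2 - ?S t1)" by (rule card_Un_le)
  finally have "card (?S t2) \<le> card (?S t1) + card (?S t2 - ?S t1)" .
  with * show ?thesis unfolding Cnt_def by simp
qed

lemma Cnt_lower:
  assumes "1 \<le> t" "1 \<le> k"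
  shows "(n + 1 - t) * ((t - 1) choose (k - 1)) \<le> Cnt n k t (\<lambda>_. True)"
proof -
  let ?F = "\<lambda>a. insert a ` {S. S \<subseteq> {a+1..a+t-1} \<and> card S = k - 1}"
  have cF: "card (?F a) = (t - 1) choose (k - 1)" for a
  proof -
    have "inj_on (insert a) {S. S \<subseteq> {a+1..a+t-1} \<and> card S = k - 1}"
    proof (rule inj_onI)
      fix x y assume "x \<in> {S. S \<subseteq> {a+1..a+t-1} \<and> card S = k - 1}" "y \<in> {S. S \<subseteq> {a+1..a+t-1} \<and> card S = k - 1}"
        "insert a x = insert a y"
      moreover have "a \<notin> x" "a \<notin> y" using calculation by auto
      ultimately show "x = y" using insert_ident[of a x y] by blast
    qed
    then have "card (?F a) = card {S. S \<subseteq> {a+1..a+t-1} \<and> card S = k - 1}" by (rule card_image)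
    also have "\<dots> = (t-1) choose (k-1)" using n_subsets[of "{a+1..a+t-1}"] assms by simp
    finally show ?thesis .
  qed
  have disj: "?F a \<inter> ?F b = {}" if "a \<noteq> b" for a b
  proof (rule ccontr)
    assume "?F a \<inter> ?F b \<noteq> {}"
    then obtain S S' where "insert a S = insert b S'" "S \<subseteq> {a+1..a+t-1}" "S' \<subseteq> {b+1..b+t-1}" by auto
    then have "Min (insert a S) = a" "Min (insert b S') = b"
      by (auto intro!: Min_eqI dest: finite_subset)
    then show False using that \<open>insert a S = insert b S'\<close> by simp
  qed
  have sub: "(\<Union>a\<in>{1..n+1-t}. ?F a) \<subseteq> {I. I \<subseteq> {1..n} \<and> card I = k \<and> width I \<le> t \<and> True}"
  proof
    fix I assume "I \<in> (\<Union>a\<in>{1..n+1-t}. ?F a)"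
    then obtain a S where a: "a \<in> {1..n+1-t}" "S \<subseteq> {a+1..a+t-1}" "card S = k - 1" "I = insert a S" by auto
    have fS: "finite S" using a(2) finite_subset by blast
    have "a \<notin> S" using a(2) by auto
    then have "card I = k" using a assms fS by simp
    moreover have "I \<subseteq> {a..a+t-1}" using a assms(1) by auto
    moreover have "I \<subseteq> {1..n}"
    proof
      fix x assume "x \<in> I"
      with \<open>I \<subseteq> {a..a+t-1}\<close> have "a \<le> x" "x \<le> a+t-1" by auto
      with a(1) assms(1) show "x \<in> {1..n}" by auto
    qed
    moreover have "width I \<le> t" using width_le[OF \<open>I \<subseteq> {a..a+t-1}\<close>] a assms by auto
    ultimately show "I \<in> {I. I \<subseteq> {1..n} \<and> card I = k \<and> width I \<le> t \<and> True}" by auto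
  qed
  have "card (\<Union>a\<in>{1..n+1-t}. ?F a) = (\<Sum>a\<in>{1..n+1-t}. card (?F a))"
  proof (rule card_UN_disjoint)
    show "finite {1..n+1-t}" by simp
    show "\<forall>i\<in>{1..n + 1 - t}. finite (?F i)"
    proof
      fix i
      have "finite {S. S \<subseteq> {i+1..i+t-1} \<and> card S = k - 1}"
        by (rule finite_subset[of _ "Pow {i+1..i+t-1}"]) auto
      then show "finite (?F i)" by (rule finite_imageI)
    qed
    show "\<forall>i\<in>{1..n + 1 - t}. \<forall>j\<in>{1..n + 1 - t}. i \<noteq> j \<longrightarrow> ?F i \<inter> ?F j = {}"
      using disj by blast
  qed
  also have "\<dots> = (n + 1 - t) * ((t - 1) choose (k - 1))" using cF by simp
  finally show ?thesis unfolding Cnt_def using card_mono[OF finite_Cset sub] by simp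
qed



definition bval :: "nat list \<Rightarrow> nat \<Rightarrow> nat \<Rightarrow> nat \<Rightarrow> nat" where
  "bval sg c q p = (if p < q * (c * length sg) then
      (p div (c * length sg)) * (c * length sg) + c * (sg ! ((p mod (c * length sg)) div c) - 1) + p mod c + 1
    else p + 1)"

definition blow :: "nat list \<Rightarrow> nat \<Rightarrow> nat \<Rightarrow> nat \<Rightarrow> nat list" where
  "blow sg c q n = map (bval sg c q) [0..<n]"

lemma decode:
  fixes c m u a d :: nat
  assumes "0 < c" "a < m" "d < c"
  shows "(u * (c*m) + (c*a + d)) div (c*m) = u" "(u * (c*m) + (c*a + d)) mod (c*m) = c*a + d"
        "(c*a + d) div c = a" "(c*a + d) mod c = d"
proof -
  have lt: "c*a + d < c*m"
  proof -
    have "c*a + d < c*a + c" using assms by simp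
    also have "\<dots> = c * (a+1)" by simp
    also have "\<dots> \<le> c*m" using assms by (intro mult_le_mono2) simp
    finally show ?thesis .
  qed
  have nz: "c*m \<noteq> 0"
  proof
    assume "c*m = 0" with lt show False by simp
  qed
  have "(c*a + d + u * (c*m)) div (c*m) = u + (c*a+d) div (c*m)" by (rule div_mult_self1[OF nz])
  then show "(u * (c*m) + (c*a + d)) div (c*m) = u" using lt by (simp add: add.commute)
  show "(u * (c*m) + (c*a + d)) mod (c*m) = c*a + d" using lt by simp
  show "(c*a + d) div c = a" using assms by simp
  show "(c*a + d) mod c = d" using assms by simp
qed

locale blowup =
  fixes sg :: "nat list" and c q n :: nat
  assumes perm: "is_perm sg" and cpos: "0 < c" and mpos: "0 < length sg"
    and qn: "q * (c * length sg) \<le> n"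
begin

abbreviation "m \<equiv> length sg"
abbreviation "M \<equiv> c * length sg"

lemma Mpos: "0 < M" using cpos mpos by simp

lemma sg_range: "i < m \<Longrightarrow> sg ! i \<in> {1..m}"
  using perm unfolding is_perm_def by (metis nth_mem)

lemma sg_inj: "i < m \<Longrightarrow> j < m \<Longrightarrow> sg ! i = sg ! j \<Longrightarrow> i = j"
  using perm unfolding is_perm_def by (simp add: nth_eq_iff_index_eq)

lemma w_div: "w < M \<Longrightarrow> w div c < m"
  using cpos by (simp add: div_less_iff_less_mult mult.commute)

lemma mod_mod_c: "p mod M mod c = p mod c"
  by (simp add: mod_mod_cancel)

lemma bval_copy:
  assumes "p < q * M"
  shows "bval sg c q p - 1 = p div M * M + (c * (sg ! (p mod M div c) - 1) + p mod c)"
    "bval sg c q p \<ge> 1"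
  using assms unfolding bval_def by auto

lemma bval_copy_le:
  assumes "p < q * M"
  shows "bval sg c q p \<le> q * M"
proof -
  let ?u = "p div M" and ?e = "p mod M div c"
  have "p mod M < M" using Mpos by simp
  then have e: "?e < m" by (rule w_div)
  then have a: "sg ! ?e - 1 < m" using sg_range[OF e] by auto
  have u: "?u < q" using assms Mpos by (simp add: div_less_iff_less_mult)
  have "c * (sg ! ?e - 1) + p mod c < M"
    using a cpos decode(1)[of c "sg ! ?e - 1" m "p mod c" 0] by (metis Mpos mod_less_divisor mod_less mult.commute decode(2) mult_0)
  then have "bval sg c q p \<le> ?u * M + M" using assms unfolding bval_def by simp
  also have "\<dots> = (?u + 1) * M" by simp
  also have "\<dots> \<le> q * M" using u by (intro mult_le_mono1) simp
  finally show ?thesis .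
qed

lemma bval_copy_dec:
  assumes "p < q * M"
  shows "(bval sg c q p - 1) div M = p div M"
    "(bval sg c q p - 1) mod M div c = sg ! (p mod M div c) - 1"
    "(bval sg c q p - 1) mod M mod c = p mod c"
proof -
  let ?e = "p mod M div c"
  have "p mod M < M" using Mpos by simp
  then have e: "?e < m" by (rule w_div)
  then have a: "sg ! ?e - 1 < m" using sg_range[OF e] by auto
  have d: "p mod c < c" using cpos by simp
  note D = decode(1,2)[OF cpos a d, of "p div M"] decode(3,4)[OF cpos a d]
  show "(bval sg c q p - 1) div M = p div M" "(bval sg c q p - 1) mod M div c = sg ! ?e - 1"
    "(bval sg c q p - 1) mod M mod c = p mod c"
    using D bval_copy(1)[OF assms] by simp_all
qed

lemma p_decomp: "p = p div M * M + (c * (p mod M div c) + p mod c)"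
proof -
  have "p mod M = c * (p mod M div c) + p mod M mod c" by simp
  then show ?thesis using mod_mod_c by (metis div_mult_mod_eq)
qed

lemma bval_inj:
  assumes "p < n" "p' < n" "bval sg c q p = bval sg c q p'"
  shows "p = p'"
proof (cases "p < q * M")
  case True
  note pT = True
  show ?thesis
  proof (cases "p' < q * M")
    case True
    have 1: "p div M = p' div M" using bval_copy_dec(1)[OF pT] bval_copy_dec(1)[OF True] assms(3) by simp
    have 2: "sg ! (p mod M div c) - 1 = sg ! (p' mod M div c) - 1"
      using bval_copy_dec(2)[OF pT] bval_copy_dec(2)[OF True] assms(3) by simp
    have 3: "p mod c = p' mod c" using bval_copy_dec(3)[OF pT] bval_copy_dec(3)[OF True] assms(3) by simp
    have e: "p mod M div c < m" "p' mod M div c < m" using Mpos by (simp_all add: w_div)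
    have "sg ! (p mod M div c) = sg ! (p' mod M div c)"
      using 2 sg_range[OF e(1)] sg_range[OF e(2)] by auto
    then have "p mod M div c = p' mod M div c" using sg_inj e by blast
    then show ?thesis using 1 3 p_decomp[of p] p_decomp[of p'] by metis
  next
    case False
    then show ?thesis using bval_copy_le[OF pT] assms(3) unfolding bval_def[of _ _ _ p'] by simp
  qed
next
  case False
  note pF = False
  show ?thesis
  proof (cases "p' < q * M")
    case True
    then show ?thesis using bval_copy_le[OF True] assms(3) pF unfolding bval_def[of _ _ _ p] by simp
  next
    case False
    then show ?thesis using pF assms(3) unfolding bval_def by simp
  qed
qed

lemma bval_range: "p < n \<Longrightarrow> bval sg c q p \<in> {1..n}"
proof (cases "p < q * M")
  case True
  then show ?thesis using bval_copy(2)[OF True] bval_copy_le[OF True] qn by auto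
next
  case False
  then show "p < n \<Longrightarrow> ?thesis" unfolding bval_def by simp
qed

lemma blow_length: "length (blow sg c q n) = n" unfolding blow_def by simp

lemma blow_nth: "p < n \<Longrightarrow> blow sg c q n ! p = bval sg c q p" unfolding blow_def by simp

lemma blow_perm: "is_perm (blow sg c q n)"
proof -
  have inj: "inj_on (bval sg c q) {0..<n}" by (rule inj_onI) (use bval_inj in auto)
  have d: "distinct (blow sg c q n)" unfolding blow_def using inj by (simp add: distinct_map)
  have s: "set (blow sg c q n) = bval sg c q ` {0..<n}" unfolding blow_def by simp
  have sub: "bval sg c q ` {0..<n} \<subseteq> {1..n}" using bval_range by auto
  have "card (bval sg c q ` {0..<n}) = n" using card_image[OF inj] by simp
  then have "bval sg c q ` {0..<n} = {1..n}" using sub by (intro card_subset_eq) auto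
  then show ?thesis unfolding is_perm_def using d s blow_length by simp
qed

definition cp :: "nat \<Rightarrow> nat" where "cp x = (x - 1) div M"
definition bk :: "nat \<Rightarrow> nat" where "bk x = (x - 1) mod M div c + 1"
definition Blk :: "nat \<Rightarrow> nat \<Rightarrow> nat set" where
  "Blk u e = {u * M + (e - 1) * c + 1 .. u * M + (e - 1) * c + c}"
definition Trans :: "nat \<Rightarrow> nat set \<Rightarrow> nat set set" where
  "Trans u J = {I. I \<subseteq> \<Union>(Blk u ` J) \<and> (\<forall>e\<in>J. card (I \<inter> Blk u e) = 1)}"

lemma blk_mem:
  assumes "e \<in> {1..m}" "x \<in> Blk u e"
  shows "cp x = u" "bk x = e" "1 \<le> x" "x - 1 = u * M + (c * (e - 1) + (x - 1) mod c)"
proof -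
  obtain d where d: "d < c" "x - 1 = u * M + (c * (e - 1) + d)"
  proof -
    let ?b = "u * M + (e - 1) * c"
    have x: "?b + 1 \<le> x" "x \<le> ?b + c" using assms(2) unfolding Blk_def by auto
    have "x - 1 - ?b < c" "x - 1 = u * M + (c * (e - 1) + (x - 1 - ?b))" using x by (auto simp: algebra_simps)
    then show ?thesis using that by blast
  qed
  have a: "e - 1 < m" using assms(1) by auto
  note D = decode(1,2)[OF cpos a d(1), of u] decode(3,4)[OF cpos a d(1)]
  show "cp x = u" unfolding cp_def using d D by simp
  show "bk x = e" unfolding bk_def using d D assms(1) by simp
  show "1 \<le> x" using assms(2) unfolding Blk_def by simp
  have "(x - 1) mod c = d"
  proof -
    have "(x-1) mod c = (x - 1) mod M mod c" using mod_mod_c by simp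
    then show ?thesis using d D by simp
  qed
  then show "x - 1 = u * M + (c * (e - 1) + (x - 1) mod c)" using d by simp
qed

lemma mem_blk:
  assumes "1 \<le> x"
  shows "x \<in> Blk (cp x) (bk x)" "bk x \<in> {1..m}"
proof -
  have p: "x - 1 = cp x * M + (c * (bk x - 1) + (x - 1) mod c)"
    using p_decomp[of "x-1"] unfolding cp_def bk_def by simp
  have r: "(x-1) mod c < c" using cpos by simp
  define b where "b = cp x * M + (bk x - 1) * c"
  have cm: "c * (bk x - 1) = (bk x - 1) * c" by (rule mult.commute)
  have xb: "x = b + (x - 1) mod c + 1" using p assms cm unfolding b_def by linarith
  show "x \<in> Blk (cp x) (bk x)" unfolding Blk_def b_def[symmetric] atLeastAtMost_iff using xb r by linarith
  have "(x - 1) mod M < M" using Mpos by simp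
  then show "bk x \<in> {1..m}" unfolding bk_def using w_div by (simp add: Suc_le_eq)
qed

lemma card_Blk: "card (Blk u e) = c" unfolding Blk_def by simp

lemma finite_Blk: "finite (Blk u e)" unfolding Blk_def by simp

lemma Blk_disj: "e \<in> {1..m} \<Longrightarrow> e' \<in> {1..m} \<Longrightarrow> x \<in> Blk u e \<Longrightarrow> x \<in> Blk u' e' \<Longrightarrow> e = e' \<and> u = u'"
  using blk_mem by metis

lemma Trans_mem:
  assumes "J \<subseteq> {1..m}" "I \<in> Trans u J" "x \<in> I"
  shows "cp x = u" "bk x \<in> J" "1 \<le> x" "x \<in> Blk u (bk x)"
proof -
  obtain e where e: "e \<in> J" "x \<in> Blk u e" using assms unfolding Trans_def by blast
  have e1: "e \<in> {1..m}" using e assms(1) by auto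
  show "cp x = u" "bk x \<in> J" "1 \<le> x" "x \<in> Blk u (bk x)" using blk_mem[OF e1 e(2)] e by auto
qed

lemma Trans_img:
  assumes "J \<subseteq> {1..m}" "I \<in> Trans u J"
  shows "bk ` I = J"
proof
  show "bk ` I \<subseteq> J" using Trans_mem[OF assms] by auto
  show "J \<subseteq> bk ` I"
  proof
    fix e assume e: "e \<in> J"
    then have "card (I \<inter> Blk u e) = 1" using assms unfolding Trans_def by auto
    then obtain z where "I \<inter> Blk u e = {z}" using card_1_singleton_iff by (metis One_nat_def)
    then have "z \<in> I" "z \<in> Blk u e" by blast+
    then obtain x where "x \<in> I" "x \<in> Blk u e" by blast
    then have "bk x = e" using blk_mem e assms(1) by auto
    then show "e \<in> bk ` I" using \<open>x \<in> I\<close> by auto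
  qed
qed

lemma Trans_inj:
  assumes "J \<subseteq> {1..m}" "I \<in> Trans u J" "x \<in> I" "y \<in> I" "bk x = bk y"
  shows "x = y"
proof -
  have "bk x \<in> J" using Trans_mem(2)[OF assms(1,2,3)] .
  have "x \<in> Blk u (bk x)" using Trans_mem(4)[OF assms(1,2,3)] .
  have "y \<in> Blk u (bk x)" using Trans_mem(4)[OF assms(1,2,4)] assms(5) by simp
  have "\<forall>e\<in>J. card (I \<inter> Blk u e) = 1" using assms(2) unfolding Trans_def by simp
  then have "card (I \<inter> Blk u (bk x)) = 1" using \<open>bk x \<in> J\<close> by blast
  then obtain z where "I \<inter> Blk u (bk x) = {z}" using card_1_singleton_iff by (metis One_nat_def)
  moreover have "x \<in> I \<inter> Blk u (bk x)" "y \<in> I \<inter> Blk u (bk x)"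
    using assms(3,4) \<open>x \<in> Blk u (bk x)\<close> \<open>y \<in> Blk u (bk x)\<close> by auto
  ultimately have "x \<in> {z}" "y \<in> {z}" by auto
  then show ?thesis by simp
qed

lemma Trans_finite:
  assumes "finite J" "I \<in> Trans u J"
  shows "finite I"
proof -
  have "finite (\<Union>(Blk u ` J))" using assms(1) finite_Blk by simp
  moreover have "I \<subseteq> \<Union>(Blk u ` J)" using assms(2) unfolding Trans_def by simp
  ultimately show ?thesis using finite_subset by blast
qed

lemma Trans_card:
  assumes "J \<subseteq> {1..m}" "I \<in> Trans u J"
  shows "card I = card J"
proof -
  have "inj_on bk I" using Trans_inj[OF assms] by (auto intro: inj_onI)
  then have "card (bk ` I) = card I" by (rule card_image)
  then show ?thesis using Trans_img[OF assms] by simp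
qed

lemma Trans_mono:
  assumes "J \<subseteq> {1..m}" "I \<in> Trans u J" "x \<in> I" "y \<in> I" "x < y"
  shows "bk x < bk y"
proof -
  have "cp x = u" "cp y = u" "1 \<le> x" "1 \<le> y" using Trans_mem[OF assms(1,2)] assms(3,4) by auto
  have px: "x - 1 = u * M + (x - 1) mod M" using div_mult_mod_eq[of "x-1" M] \<open>cp x = u\<close> unfolding cp_def by simp
  have py: "y - 1 = u * M + (y - 1) mod M" using div_mult_mod_eq[of "y-1" M] \<open>cp y = u\<close> unfolding cp_def by simp
  have "(x - 1) mod M < (y - 1) mod M" using px py assms(5) \<open>1 \<le> x\<close> by linarith
  then have "bk x \<le> bk y" unfolding bk_def by (simp add: div_le_mono)
  moreover have "bk x \<noteq> bk y" using Trans_inj[OF assms(1,2,3,4)] assms(5) by auto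
  ultimately show ?thesis by simp
qed

lemma card_Trans:
  assumes "J \<subseteq> {1..m}"
  shows "card (Trans u J) = c ^ card J"
proof -
  have fJ: "finite J" using assms finite_subset by blast
  let ?P = "PiE J (Blk u)"
  have inj: "inj_on (\<lambda>d. d ` J) ?P"
  proof (rule inj_onI)
    fix d d' assume d: "d \<in> ?P" and d': "d' \<in> ?P" and eq: "d ` J = d' ` J"
    show "d = d'"
    proof (rule PiE_ext[OF d d'])
      fix e assume e: "e \<in> J"
      then have "d e \<in> d' ` J" using eq by auto
      then obtain e' where e': "e' \<in> J" "d e = d' e'" by auto
      have "d e \<in> Blk u e" using PiE_mem[OF d e] .
      have "d' e' \<in> Blk u e'" using PiE_mem[OF d' e'(1)] .
      have "e \<in> {1..m}" "e' \<in> {1..m}" using assms e e'(1) by auto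
      then have "e = e'" using Blk_disj[of e e' "d e" u u] \<open>d e \<in> Blk u e\<close> \<open>d' e' \<in> Blk u e'\<close> e'(2) by simp
      then show "d e = d' e" using e' by simp
    qed
  qed
  have img: "(\<lambda>d. d ` J) ` ?P = Trans u J"
  proof
    show "(\<lambda>d. d ` J) ` ?P \<subseteq> Trans u J"
    proof
      fix I assume "I \<in> (\<lambda>d. d ` J) ` ?P"
      then obtain d where d: "d \<in> ?P" "I = d ` J" by auto
      have "I \<inter> Blk u e = {d e}" if e: "e \<in> J" for e
      proof
        show "{d e} \<subseteq> I \<inter> Blk u e" using d e by auto
        show "I \<inter> Blk u e \<subseteq> {d e}"
        proof
          fix x assume "x \<in> I \<inter> Blk u e"
          then obtain e' where "e' \<in> J" "x = d e'" "x \<in> Blk u e" using d by auto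
          moreover have "d e' \<in> Blk u e'" using d \<open>e' \<in> J\<close> by auto
          moreover have "e \<in> {1..m}" "e' \<in> {1..m}" using assms e \<open>e' \<in> J\<close> by auto
          ultimately have "e = e'" using Blk_disj[of e e' x u u] by simp
          then show "x \<in> {d e}" using \<open>x = d e'\<close> by simp
        qed
      qed
      then show "I \<in> Trans u J" unfolding Trans_def using d by auto
    qed
    show "Trans u J \<subseteq> (\<lambda>d. d ` J) ` ?P"
    proof
      fix I assume I: "I \<in> Trans u J"
      have ex: "\<exists>x. I \<inter> Blk u e = {x}" if "e \<in> J" for e
        using I that unfolding Trans_def by (auto simp: card_1_singleton_iff)
      define d where "d = (\<lambda>e\<in>J. THE x. x \<in> I \<and> x \<in> Blk u e)"
      have de: "I \<inter> Blk u e = {d e}" if eJ: "e \<in> J" for e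
      proof -
        obtain x where x: "I \<inter> Blk u e = {x}" using ex[OF eJ] by blast
        then have "(THE y. y \<in> I \<and> y \<in> Blk u e) = x" by (intro the_equality) auto
        moreover have "d e = (THE y. y \<in> I \<and> y \<in> Blk u e)" using eJ unfolding d_def by simp
        ultimately show ?thesis using x by simp
      qed
      have "d \<in> ?P" unfolding d_def using de by (auto simp: d_def)
      moreover have "d ` J = I"
      proof
        show "d ` J \<subseteq> I" using de by auto
        show "I \<subseteq> d ` J"
        proof
          fix x assume x: "x \<in> I"
          then obtain e where "e \<in> J" "x \<in> Blk u e" using I unfolding Trans_def by auto
          then have "x = d e" using de x by auto
          then show "x \<in> d ` J" using \<open>e \<in> J\<close> by auto
        qed
      qed
      ultimately show "I \<in> (\<lambda>d. d ` J) ` ?P" by auto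
    qed
  qed
  have "card (Trans u J) = card ?P" using bij_betw_same_card[OF bij_betw_imageI[OF inj img]] by simp
  also have "\<dots> = c ^ card J" using card_PiE[OF fJ, of "Blk u"] by (simp add: card_Blk)
  finally show ?thesis .
qed

end


lemma sorted_list_of_set_mono_image:
  fixes f :: "nat \<Rightarrow> nat"
  assumes "finite I" "\<And>x y. x \<in> I \<Longrightarrow> y \<in> I \<Longrightarrow> x < y \<Longrightarrow> f x < f y"
  shows "sorted_list_of_set (f ` I) = map f (sorted_list_of_set I)"
proof (rule strict_sorted_equal)
  show "sorted_wrt (<) (sorted_list_of_set (f ` I))" by (rule strict_sorted_list_of_set)
  have s: "sorted_wrt (<) (sorted_list_of_set I)" by (rule strict_sorted_list_of_set)
  have "sorted_wrt (\<lambda>x y. f x < f y) (sorted_list_of_set I)"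
    by (rule sorted_wrt_mono_rel[OF _ s]) (use assms in auto)
  then show "sorted_wrt (<) (map f (sorted_list_of_set I))" by (simp add: sorted_wrt_map)
  show "set (sorted_list_of_set (f ` I)) = set (map f (sorted_list_of_set I))"
    using assms(1) by simp
qed

context blowup begin

lemma Blk_le:
  assumes "e \<in> {1..m}" "x \<in> Blk u e"
  shows "u * M + (e - 1) * c + 1 \<le> x" "x \<le> u * M + e * c"
proof -
  show "u * M + (e - 1) * c + 1 \<le> x" using assms(2) unfolding Blk_def by simp
  have "(e - 1) * c + c = e * c" using assms(1) by (cases e) auto
  then show "x \<le> u * M + e * c" using assms(2) unfolding Blk_def by simp
qed

lemma Trans_bounds:
  assumes "J \<subseteq> {1..m}" "I \<in> Trans u J" "x \<in> I"
  shows "u * M + (bk x - 1) * c + 1 \<le> x" "x \<le> u * M + bk x * c"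
proof -
  have "bk x \<in> J" "x \<in> Blk u (bk x)" using Trans_mem[OF assms] by auto
  then have "bk x \<in> {1..m}" using assms(1) by auto
  then show "u * M + (bk x - 1) * c + 1 \<le> x" "x \<le> u * M + bk x * c"
    using Blk_le \<open>x \<in> Blk u (bk x)\<close> by auto
qed

lemma width_lift:
  assumes "J \<subseteq> {1..m}" "I \<in> Trans u J" "J \<noteq> {}"
  shows "width I \<le> c * width J"
proof -
  have fJ: "finite J" using assms(1) finite_subset by blast
  have fI: "finite I" using Trans_finite[OF fJ assms(2)] .
  have img: "bk ` I = J" using Trans_img[OF assms(1,2)] .
  then have neI: "I \<noteq> {}" using assms(3) by auto
  have "Max I \<in> I" "Min I \<in> I" using fI neI by auto
  have "bk (Max I) \<le> Max J" using img fJ \<open>Max I \<in> I\<close> by auto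
  have "Min J \<le> bk (Min I)" using img fJ \<open>Min I \<in> I\<close> by auto
  have "Min J \<ge> 1" using assms fJ Min_in by fastforce
  have "Min J \<le> Max J" using fJ assms(3) by simp
  have a: "Max I \<le> u * M + Max J * c"
    using Trans_bounds(2)[OF assms(1,2) \<open>Max I \<in> I\<close>] \<open>bk (Max I) \<le> Max J\<close>
    by (meson add_le_mono le_refl mult_le_mono1 order_trans)
  have b1: "(Min J - 1) * c \<le> (bk (Min I) - 1) * c" using \<open>Min J \<le> bk (Min I)\<close> by (intro mult_le_mono1) simp
  have b: "u * M + (Min J - 1) * c + 1 \<le> Min I"
    using Trans_bounds(1)[OF assms(1,2) \<open>Min I \<in> I\<close>] b1 by linarith
  have w: "width J = Max J - Min J + 1" unfolding width_def by simp
  have "c * width J = Max J * c - (Min J - 1) * c"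
    using w \<open>Min J \<ge> 1\<close> \<open>Min J \<le> Max J\<close> by (simp add: diff_mult_distrib algebra_simps)
  moreover have "(Min J - 1) * c \<le> Max J * c" using \<open>Min J \<le> Max J\<close> by (intro mult_le_mono1) simp
  moreover have "Min I \<le> Max I" using fI neI by simp
  ultimately show ?thesis unfolding width_def using a b by linarith
qed

lemma width_down:
  assumes "J \<subseteq> {1..m}" "I \<in> Trans u J" "J \<noteq> {}"
  shows "(width J - 2) * c \<le> width I"
proof -
  have fJ: "finite J" using assms(1) finite_subset by blast
  have fI: "finite I" using Trans_finite[OF fJ assms(2)] .
  have img: "bk ` I = J" using Trans_img[OF assms(1,2)] .
  obtain y where y: "y \<in> I" "bk y = Max J" using img fJ assms(3) Max_in by (metis imageE)
  obtain z where z: "z \<in> I" "bk z = Min J" using img fJ assms(3) Min_in by (metis imageE)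
  have "Max J \<ge> 1" using assms fJ Max_in by fastforce
  have y1: "u * M + (Max J - 1) * c + 1 \<le> y" using Trans_bounds(1)[OF assms(1,2) y(1)] y(2) by simp
  have z1: "z \<le> u * M + Min J * c" using Trans_bounds(2)[OF assms(1,2) z(1)] z(2) by simp
  have "y \<le> Max I" "Min I \<le> z" using fI y z by auto
  have "(width J - 2) * c = (Max J - 1) * c - Min J * c"
    unfolding width_def by (simp add: diff_mult_distrib)
  then show ?thesis unfolding width_def using y1 z1 \<open>y \<le> Max I\<close> \<open>Min I \<le> z\<close> by linarith
qed

lemma Trans_in_copy:
  assumes "J \<subseteq> {1..m}" "I \<in> Trans u J" "u < q" "x \<in> I"
  shows "x - 1 < q * M" "1 \<le> x"
    "bval sg c q (x - 1) = u * M + c * (sg ! (bk x - 1) - 1) + (x - 1) mod c + 1"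
proof -
  have b: "x \<le> u * M + bk x * c" using Trans_bounds(2)[OF assms(1,2,4)] .
  have "bk x \<in> J" using Trans_mem[OF assms(1,2,4)] by simp
  then have "bk x \<le> m" using assms(1) by auto
  then have "bk x * c \<le> M" by (simp add: mult.commute)
  then have "x \<le> u * M + M" using b by linarith
  also have "\<dots> = (u + 1) * M" by simp
  also have "\<dots> \<le> q * M" using assms(3) by (intro mult_le_mono1) simp
  finally have xq: "x \<le> q * M" .
  show "1 \<le> x" using Trans_mem[OF assms(1,2,4)] by simp
  then show x1: "x - 1 < q * M" using xq by simp
  have "(x - 1) div M = u" using Trans_mem[OF assms(1,2,4)] unfolding cp_def by simp
  moreover have "(x - 1) mod M div c = bk x - 1" unfolding bk_def by simp
  ultimately show "bval sg c q (x - 1) = u * M + c * (sg ! (bk x - 1) - 1) + (x - 1) mod c + 1"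
    using x1 unfolding bval_def by simp
qed

lemma Trans_order:
  assumes "J \<subseteq> {1..m}" "I \<in> Trans u J" "u < q" "x \<in> I" "y \<in> I" "bk x \<noteq> bk y"
  shows "bval sg c q (x - 1) < bval sg c q (y - 1) \<longleftrightarrow> sg ! (bk x - 1) < sg ! (bk y - 1)"
proof -
  have "bk x \<in> J" "bk y \<in> J" using Trans_mem(2)[OF assms(1,2,4)] Trans_mem(2)[OF assms(1,2,5)] .
  then have bx: "bk x \<in> {1..m}" "bk y \<in> {1..m}" using assms(1) by blast+
  then have r: "sg ! (bk x - 1) \<in> {1..m}" "sg ! (bk y - 1) \<in> {1..m}" using sg_range by auto
  have ne: "sg ! (bk x - 1) \<noteq> sg ! (bk y - 1)"
  proof
    assume "sg ! (bk x - 1) = sg ! (bk y - 1)"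
    then have "bk x - 1 = bk y - 1" using sg_inj bx by auto
    then show False using assms(6) bx by auto
  qed
  define a where "a = sg ! (bk x - 1) - 1"
  define b where "b = sg ! (bk y - 1) - 1"
  have ab: "a \<noteq> b" "a < b \<longleftrightarrow> sg ! (bk x - 1) < sg ! (bk y - 1)" using ne r[unfolded atLeastAtMost_iff] unfolding a_def b_def by linarith+
  have dx: "(x - 1) mod c < c" "(y - 1) mod c < c" using cpos by auto
  have vx: "bval sg c q (x - 1) = u * M + c * a + (x - 1) mod c + 1"
    using Trans_in_copy(3)[OF assms(1-4)] unfolding a_def .
  have vy: "bval sg c q (y - 1) = u * M + c * b + (y - 1) mod c + 1"
    using Trans_in_copy(3)[OF assms(1-3,5)] unfolding b_def .
  show ?thesis
  proof (cases "a < b")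
    case True
    then have "c * a + c \<le> c * b" by (metis Suc_leI mult_Suc_right mult_le_mono2 add.commute)
    then show ?thesis using vx vy dx ab True by linarith
  next
    case False
    then have "b < a" using ab by simp
    then have "c * b + c \<le> c * a" by (metis Suc_leI mult_Suc_right mult_le_mono2 add.commute)
    then show ?thesis using vx vy dx ab False by linarith
  qed
qed

lemma occ_transfer:
  assumes "J \<subseteq> {1..m}" "I \<in> Trans u J" "u < q"
  shows "occurrence pat (blow sg c q n) I \<longleftrightarrow> occurrence pat sg J"
proof -
  have fJ: "finite J" using assms(1) finite_subset by blast
  have fI: "finite I" using Trans_finite[OF fJ assms(2)] .
  have cI: "card I = card J" using Trans_card[OF assms(1,2)] .
  have img: "bk ` I = J" using Trans_img[OF assms(1,2)] .
  let ?ix = "sorted_list_of_set I"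
  have ixJ: "sorted_list_of_set J = map bk ?ix"
    using sorted_list_of_set_mono_image[OF fI, of bk] Trans_mono[OF assms(1,2)] img by simp
  have len: "length ?ix = card I" by simp
  have Isub: "I \<subseteq> {1..n}"
  proof
    fix x assume "x \<in> I"
    then have "x - 1 < q * M" "1 \<le> x" using Trans_in_copy[OF assms \<open>x \<in> I\<close>] by auto
    then show "x \<in> {1..n}" using qn by auto
  qed
  have key: "(blow sg c q n ! (?ix ! a - 1) < blow sg c q n ! (?ix ! b - 1)) \<longleftrightarrow>
             (sg ! (sorted_list_of_set J ! a - 1) < sg ! (sorted_list_of_set J ! b - 1))"
    if ab: "a < card I" "b < card I" for a b
  proof -
    have xa: "?ix ! a \<in> I" "?ix ! b \<in> I" using ab len nth_mem set_sorted_list_of_set fI by metis+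
    have J': "sorted_list_of_set J ! a = bk (?ix ! a)" "sorted_list_of_set J ! b = bk (?ix ! b)"
      using ixJ ab len by simp_all
    have "?ix ! a \<in> {1..n}" "?ix ! b \<in> {1..n}" using xa Isub by blast+
    then have n1: "?ix ! a - 1 < n" "?ix ! b - 1 < n" by auto
    show ?thesis
    proof (cases "a = b")
      case True then show ?thesis by simp
    next
      case False
      then have "?ix ! a \<noteq> ?ix ! b" using ab len distinct_sorted_list_of_set nth_eq_iff_index_eq by metis
      then have "bk (?ix ! a) \<noteq> bk (?ix ! b)" using Trans_inj[OF assms(1,2) xa] by blast
      then show ?thesis using Trans_order[OF assms xa] J' n1 blow_nth by simp
    qed
  qed
  show ?thesis unfolding occurrence_def Let_def
    using Isub assms(1) cI key blow_length by auto
qed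

end


context blowup begin

lemma Trans_disj:
  assumes "J \<subseteq> {1..m}" "J' \<subseteq> {1..m}" "J \<noteq> {}" "I \<in> Trans u J" "I \<in> Trans u' J'"
  shows "u = u' \<and> J = J'"
proof -
  have "J = J'" using Trans_img[OF assms(1,4)] Trans_img[OF assms(2,5)] by simp
  moreover obtain x where x: "x \<in> I" using Trans_img[OF assms(1,4)] assms(3) by auto
  moreover have "cp x = u" using Trans_mem(1)[OF assms(1,4) x] .
  moreover have "cp x = u'" using Trans_mem(1)[OF assms(2,5) x] .
  ultimately show ?thesis by simp
qed

lemma LB:
  fixes P :: "nat set \<Rightarrow> bool" and Ps :: "nat set \<Rightarrow> bool"
  assumes k: "1 \<le> k" and st: "s * c \<le> t"
    and tr: "\<And>u J I. u < q \<Longrightarrow> J \<subseteq> {1..m} \<Longrightarrow> I \<in> Trans u J \<Longrightarrow> P I = Ps J"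
  shows "q * c ^ k * Cnt m k s Ps \<le> Cnt n k t P"
proof -
  let ?SJ = "{J. J \<subseteq> {1..m} \<and> card J = k \<and> width J \<le> s \<and> Ps J}"
  let ?X = "{0..<q} \<times> ?SJ"
  let ?A = "\<lambda>p. Trans (fst p) (snd p)"
  have fX: "finite ?X" using finite_Cset by auto
  have fA: "\<forall>p\<in>?X. finite (?A p)"
  proof
    fix p assume "p \<in> ?X"
    have "Trans (fst p) (snd p) \<subseteq> Pow {1..n}"
    proof
      fix I assume I: "I \<in> Trans (fst p) (snd p)"
      have "I \<subseteq> {1..n}"
      proof
        fix x assume "x \<in> I"
        then have "x - 1 < q * M" "1 \<le> x" using Trans_in_copy[of "snd p" I "fst p" x] \<open>p \<in> ?X\<close> I by auto
        then show "x \<in> {1..n}" using qn by auto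
      qed
      then show "I \<in> Pow {1..n}" by simp
    qed
    then show "finite (?A p)" by (rule finite_subset) simp
  qed
  have disj: "\<forall>p\<in>?X. \<forall>p'\<in>?X. p \<noteq> p' \<longrightarrow> ?A p \<inter> ?A p' = {}"
  proof (intro ballI impI)
    fix p p' assume p: "p \<in> ?X" and p': "p' \<in> ?X" and ne: "p \<noteq> p'"
    show "?A p \<inter> ?A p' = {}"
    proof (rule ccontr)
      assume "?A p \<inter> ?A p' \<noteq> {}"
      then obtain I where "I \<in> ?A p" "I \<in> ?A p'" by auto
      moreover have "snd p \<noteq> {}" using p k by auto
      moreover have "snd p \<subseteq> {1..m}" "snd p' \<subseteq> {1..m}" using p p' by auto
      ultimately have "fst p = fst p' \<and> snd p = snd p'" using Trans_disj[of "snd p" "snd p'" I "fst p" "fst p'"] by blast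
      then show False using ne by (simp add: prod_eq_iff)
    qed
  qed
  have sub: "(\<Union>p\<in>?X. ?A p) \<subseteq> {I. I \<subseteq> {1..n} \<and> card I = k \<and> width I \<le> t \<and> P I}"
  proof
    fix I assume "I \<in> (\<Union>p\<in>?X. ?A p)"
    then obtain u J where uJ: "u < q" "J \<subseteq> {1..m}" "card J = k" "width J \<le> s" "Ps J" "I \<in> Trans u J" by auto
    have "J \<noteq> {}" using uJ k by auto
    have "I \<subseteq> {1..n}"
    proof
      fix x assume "x \<in> I"
      then have "x - 1 < q * M" "1 \<le> x" using Trans_in_copy[OF uJ(2,6,1)] by auto
      then show "x \<in> {1..n}" using qn by auto
    qed
    moreover have "card I = k" using Trans_card[OF uJ(2,6)] uJ(3) by simp
    moreover have "width I \<le> t"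
    proof -
      have "width I \<le> c * width J" using width_lift[OF uJ(2,6) \<open>J \<noteq> {}\<close>] .
      also have "\<dots> \<le> c * s" using uJ(4) by simp
      finally show ?thesis using st by (simp add: mult.commute)
    qed
    moreover have "P I" using tr[OF uJ(1,2,6)] uJ(5) by simp
    ultimately show "I \<in> {I. I \<subseteq> {1..n} \<and> card I = k \<and> width I \<le> t \<and> P I}" by simp
  qed
  have "card (\<Union>p\<in>?X. ?A p) = (\<Sum>p\<in>?X. card (?A p))" by (rule card_UN_disjoint[OF fX fA disj])
  also have "\<dots> = (\<Sum>p\<in>?X. c ^ k)"
  proof (rule sum.cong[OF refl])
    fix p assume "p \<in> ?X"
    then show "card (?A p) = c ^ k" using card_Trans[of "snd p" "fst p"] by auto
  qed
  also have "\<dots> = q * card ?SJ * c ^ k" by (simp add: card_cartesian_product)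
  finally have "card (\<Union>p\<in>?X. ?A p) = q * c ^ k * Cnt m k s Ps" unfolding Cnt_def by simp
  moreover have "card (\<Union>p\<in>?X. ?A p) \<le> Cnt n k t P" unfolding Cnt_def by (rule card_mono[OF finite_Cset sub])
  ultimately show ?thesis by simp
qed

lemma card_Win: "card {x - t .. x + t} \<le> 2 * t + 1"
  by simp

lemma S_bound:
  fixes x :: nat and X :: "nat set"
  assumes "x \<in> X" "finite X"
  shows "card {I. I \<subseteq> {x - t .. x + t} \<and> card I = k \<and> X \<subseteq> I} \<le> (2 * t + 1) choose (k - card X)"
proof -
  have "card {I. I \<subseteq> {x - t .. x + t} \<and> card I = k \<and> X \<subseteq> I} \<le> card {x - t .. x + t} choose (k - card X)"
    by (rule card_superset_le) (use assms in auto)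
  also have "\<dots> \<le> (2 * t + 1) choose (k - card X)" by (rule binomial_right_mono[OF card_Win])
  finally show ?thesis .
qed

lemma cp_mono: "x \<le> y \<Longrightarrow> cp x \<le> cp y"
  unfolding cp_def by (simp add: div_le_mono)

lemma card_BP:
  "card {(x,y). x \<in> {1..q*M} \<and> y \<in> {1..q*M} \<and> x < y \<and> y < x + t \<and> (cp x \<noteq> cp y \<or> bk x = bk y)}
     \<le> n * c + q * (t * t)"
proof -
  let ?BP = "{(x,y). x \<in> {1..q*M} \<and> y \<in> {1..q*M} \<and> x < y \<and> y < x + t \<and> (cp x \<noteq> cp y \<or> bk x = bk y)}"
  let ?B1 = "Sigma {1..n} (\<lambda>x. {x<..<x+c})"
  let ?B2 = "\<Union>v\<in>{1..<q}. ({v * M + 1 - t .. v * M} \<times> {v * M + 1 .. v * M + t})"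
  have sub: "?BP \<subseteq> ?B1 \<union> ?B2"
  proof
    fix p assume "p \<in> ?BP"
    then obtain x y where p: "p = (x,y)" "x \<in> {1..q*M}" "y \<in> {1..q*M}" "x < y" "y < x + t"
      "cp x \<noteq> cp y \<or> bk x = bk y" by auto
    show "p \<in> ?B1 \<union> ?B2"
    proof (cases "cp x = cp y")
      case True
      then have "bk x = bk y" using p by simp
      have x1: "1 \<le> x" "1 \<le> y" using p by auto
      have "x \<in> Blk (cp x) (bk x)" "y \<in> Blk (cp x) (bk x)" using mem_blk(1)[OF x1(1)] mem_blk(1)[OF x1(2)]
        True \<open>bk x = bk y\<close> by simp_all
      then have "y < x + c" unfolding Blk_def by auto
      then have "p \<in> ?B1" using p qn by auto
      then show ?thesis by simp
    next
      case False
      then have lt: "cp x < cp y" using cp_mono[of x y] p(4) by simp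
      define v where "v = cp y"
      have "1 \<le> v" using lt v_def by simp
      have "y - 1 < q * M" using p by auto
      then have "v < q" unfolding v_def cp_def using Mpos by (simp add: div_less_iff_less_mult)
      have "v * M \<le> y - 1" unfolding v_def cp_def by (metis div_mult_mod_eq le_add1)
      have "cp x \<le> v - 1" using lt v_def by simp
      then have "(x - 1) div M < v" using \<open>1 \<le> v\<close> unfolding cp_def by simp
      then have "x - 1 < v * M" using Mpos by (simp add: div_less_iff_less_mult)
      have "x \<in> {v * M + 1 - t .. v * M}" "y \<in> {v * M + 1 .. v * M + t}"
        using \<open>v * M \<le> y - 1\<close> \<open>x - 1 < v * M\<close> p by auto
      then have "p \<in> ?B2" using p \<open>1 \<le> v\<close> \<open>v < q\<close> by auto
      then show ?thesis by simp
    qed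
  qed
  have fB2: "finite ?B2" by simp
  have "card ?BP \<le> card (?B1 \<union> ?B2)" by (rule card_mono[OF _ sub]) (simp add: fB2)
  also have "\<dots> \<le> card ?B1 + card ?B2" by (rule card_Un_le)
  also have "card ?B1 \<le> n * c"
  proof -
    have "card ?B1 = (\<Sum>x\<in>{1..n}. card {x<..<x+c})" by simp
    also have "\<dots> \<le> (\<Sum>x\<in>{1..n}. c)" by (intro sum_mono) simp
    finally show ?thesis by simp
  qed
  also have "card ?B2 \<le> q * (t * t)"
  proof -
    have "card ?B2 \<le> (\<Sum>v\<in>{1..<q}. card ({v * M + 1 - t .. v * M} \<times> {v * M + 1 .. v * M + t}))" by (rule card_UN_le) simp
    also have "\<dots> \<le> (\<Sum>v\<in>{1..<q}. t * t)"
    proof (rule sum_mono)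
      fix v
      have "card {v * M + 1 - t .. v * M} \<le> t" by simp
      then show "card ({v * M + 1 - t .. v * M} \<times> {v * M + 1 .. v * M + t}) \<le> t * t" by (simp add: card_cartesian_product)
    qed
    also have "\<dots> \<le> q * (t * t)" by simp
    finally show ?thesis .
  qed
  finally show ?thesis by simp
qed

lemma UB:
  fixes P :: "nat set \<Rightarrow> bool" and Ps :: "nat set \<Rightarrow> bool"
  assumes k: "1 \<le> k"
    and tr: "\<And>u J I. u < q \<Longrightarrow> J \<subseteq> {1..m} \<Longrightarrow> I \<in> Trans u J \<Longrightarrow> P I = Ps J"
  shows "Cnt n k t P \<le> q * c ^ k * Cnt m k (t div c + 2) Ps
           + (n - q * M) * ((2 * t + 1) choose (k - 1)) + (n * c + q * (t * t)) * ((2 * t + 1) choose (k - 2))"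
proof -
  let ?SI = "{I. I \<subseteq> {1..n} \<and> card I = k \<and> width I \<le> t \<and> P I}"
  let ?SJ = "{J. J \<subseteq> {1..m} \<and> card J = k \<and> width J \<le> t div c + 2 \<and> Ps J}"
  let ?X = "{0..<q} \<times> ?SJ"
  let ?G = "\<Union>p\<in>?X. Trans (fst p) (snd p)"
  let ?S1 = "\<lambda>x. {I. I \<subseteq> {x - t .. x + t} \<and> card I = k \<and> {x} \<subseteq> I}"
  let ?S2 = "\<lambda>x y. {I. I \<subseteq> {x - t .. x + t} \<and> card I = k \<and> {x,y} \<subseteq> I}"
  let ?Pad = "{q*M+1..n}"
  let ?BP = "{(x,y). x \<in> {1..q*M} \<and> y \<in> {1..q*M} \<and> x < y \<and> y < x + t \<and> (cp x \<noteq> cp y \<or> bk x = bk y)}"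
  let ?B1 = "\<Union>x\<in>?Pad. ?S1 x"
  let ?B2 = "\<Union>p\<in>?BP. ?S2 (fst p) (snd p)"
  have fX: "finite ?X" using finite_Cset by auto
  have fG: "finite ?G"
  proof (rule finite_UN_I[OF fX])
    fix p assume "p \<in> ?X"
    show "finite (Trans (fst p) (snd p))"
    proof -
      have "card (Trans (fst p) (snd p)) = c ^ card (snd p)" using card_Trans \<open>p \<in> ?X\<close> by auto
      moreover have "c ^ card (snd p) > 0" using cpos by simp
      ultimately show ?thesis by (intro card_ge_0_finite) simp
    qed
  qed
  have fS: "finite {I. I \<subseteq> {x - t .. x + t} \<and> Q I}" for x Q
    by (rule finite_subset[of _ "Pow {x - t .. x + t}"]) (blast, simp)
  have fB1: "finite ?B1" using fS by auto
  have fBP: "finite ?BP" by (rule finite_subset[of _ "{1..q*M} \<times> {1..q*M}"]) auto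
  have fB2: "finite ?B2" using fBP fS by auto
  have sub: "?SI \<subseteq> ?G \<union> ?B1 \<union> ?B2"
  proof
    fix I assume I: "I \<in> ?SI"
    have fI: "finite I" using I finite_subset by blast
    have neI: "I \<noteq> {}" using I k by auto
    have win: "I \<subseteq> {x - t .. x + t}" if "x \<in> I" for x
    proof
      fix z assume "z \<in> I"
      have "width I \<le> t" using I by simp
      then have "z \<le> x + t" "x \<le> z + t" using in_window[OF fI that \<open>z \<in> I\<close>] by auto
      then show "z \<in> {x - t .. x + t}" by auto
    qed
    show "I \<in> ?G \<union> ?B1 \<union> ?B2"
    proof (cases "\<exists>x\<in>I. q * M < x")
      case True
      then obtain x where x: "x \<in> I" "q * M < x" by blast
      then have "x \<in> ?Pad" using I by auto
      moreover have "I \<in> ?S1 x" using win[OF x(1)] x I by auto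
      ultimately show ?thesis by blast
    next
      case False
      then have allq: "\<forall>x\<in>I. x \<le> q * M" by auto
      show ?thesis
      proof (cases "\<exists>x\<in>I. \<exists>y\<in>I. x < y \<and> (cp x \<noteq> cp y \<or> bk x = bk y)")
        case True
        then obtain x y where xy: "x \<in> I" "y \<in> I" "x < y" "cp x \<noteq> cp y \<or> bk x = bk y" by blast
        have "y \<le> Max I" "Min I \<le> x" using fI xy by auto
        then have "y < x + t" using I unfolding width_def by auto
        then have "(x,y) \<in> ?BP" using xy allq I by auto
        moreover have "I \<in> ?S2 x y" using win[OF xy(1)] xy I by auto
        ultimately have "I \<in> ?B2" by (intro UN_I[of "(x,y)"]) simp_all
        then show ?thesis by simp
      next
        case False
        then have good: "\<And>x y. x \<in> I \<Longrightarrow> y \<in> I \<Longrightarrow> x < y \<Longrightarrow> cp x = cp y \<and> bk x \<noteq> bk y" by blast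
        obtain x0 where x0: "x0 \<in> I" using neI by auto
        define u where "u = cp x0"
        have cpu: "cp x = u" if xI: "x \<in> I" for x
        proof -
          consider "x < x0" | "x = x0" | "x0 < x" by linarith
          then show ?thesis
          proof cases
            case 1 then show ?thesis using good[OF xI x0] unfolding u_def by blast
          next
            case 2 then show ?thesis unfolding u_def by simp
          next
            case 3 then show ?thesis using good[OF x0 xI] unfolding u_def by simp
          qed
        qed
        have injb: "x = y" if xI: "x \<in> I" and yI: "y \<in> I" and b: "bk x = bk y" for x y
        proof -
          consider "x < y" | "x = y" | "y < x" by linarith
          then show ?thesis
          proof cases
            case 1 then show ?thesis using good[OF xI yI] b by blast
          next
            case 2 then show ?thesis .
          next
            case 3 then show ?thesis using good[OF yI xI] b by simp
          qed
        qed
        have one: "1 \<le> x" if "x \<in> I" for x using I that by auto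
        have "x0 - 1 < q * M" using allq x0 one[OF x0] by auto
        then have uq: "u < q" unfolding u_def cp_def using Mpos by (simp add: div_less_iff_less_mult)
        define J where "J = bk ` I"
        have Jsub: "J \<subseteq> {1..m}" unfolding J_def using mem_blk(2) one by auto
        have IT: "I \<in> Trans u J" unfolding Trans_def
        proof (intro CollectI conjI ballI)
          show "I \<subseteq> \<Union> (Blk u ` J)"
          proof
            fix x assume "x \<in> I"
            have "x \<in> Blk (cp x) (bk x)" using mem_blk(1)[OF one[OF \<open>x \<in> I\<close>]] .
            then have "x \<in> Blk u (bk x)" using cpu[OF \<open>x \<in> I\<close>] by simp
            then show "x \<in> \<Union> (Blk u ` J)" unfolding J_def using \<open>x \<in> I\<close> by auto
          qed
          fix e assume "e \<in> J"
          then obtain x1 where x1: "x1 \<in> I" "e = bk x1" unfolding J_def by auto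
          have e1: "e \<in> {1..m}" using \<open>e \<in> J\<close> Jsub by auto
          have "I \<inter> Blk u e = {x1}"
          proof
            show "I \<inter> Blk u e \<subseteq> {x1}"
            proof
              fix z assume "z \<in> I \<inter> Blk u e"
              then have "bk z = e" "z \<in> I" using blk_mem(2)[OF e1] by auto
              then show "z \<in> {x1}" using injb[OF \<open>z \<in> I\<close> x1(1)] x1 by simp
            qed
            have "x1 \<in> Blk u e" using mem_blk(1)[OF one[OF x1(1)]] cpu[OF x1(1)] x1(2) by simp
            then show "{x1} \<subseteq> I \<inter> Blk u e" using x1 by simp
          qed
          then show "card (I \<inter> Blk u e) = 1" by simp
        qed
        have "inj_on bk I" using injb by (auto intro: inj_onI)
        then have "card (bk ` I) = card I" by (rule card_image)
        then have cJ: "card J = k" unfolding J_def using I by simp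
        have "J \<noteq> {}" using neI J_def by simp
        have "(width J - 2) * c \<le> t" using width_down[OF Jsub IT \<open>J \<noteq> {}\<close>] I by simp
        then have "width J - 2 \<le> t div c" using cpos by (simp add: less_eq_div_iff_mult_less_eq)
        then have wJ: "width J \<le> t div c + 2" by simp
        have "Ps J" using tr[OF uq Jsub IT] I by simp
        then have "(u, J) \<in> ?X" using uq Jsub cJ wJ by simp
        then have "I \<in> ?G" using IT by (intro UN_I[of "(u,J)"]) simp_all
        then show ?thesis by simp
      qed
    qed
  qed
  have "card ?SI \<le> card (?G \<union> ?B1 \<union> ?B2)" by (rule card_mono[OF finite_UnI[OF finite_UnI[OF fG fB1] fB2] sub])
  also have "\<dots> \<le> card (?G \<union> ?B1) + card ?B2" by (rule card_Un_le)
  also have "\<dots> \<le> card ?G + card ?B1 + card ?B2" using card_Un_le[of ?G ?B1] by simp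
  also have "card ?G \<le> q * c ^ k * Cnt m k (t div c + 2) Ps"
  proof -
    have "card ?G \<le> (\<Sum>p\<in>?X. card (Trans (fst p) (snd p)))" by (rule card_UN_le[OF fX])
    also have "\<dots> = (\<Sum>p\<in>?X. c ^ k)"
    proof (rule sum.cong[OF refl])
      fix p assume "p \<in> ?X"
      then show "card (Trans (fst p) (snd p)) = c ^ k" using card_Trans[of "snd p" "fst p"] by auto
    qed
    also have "\<dots> = q * c ^ k * Cnt m k (t div c + 2) Ps" unfolding Cnt_def by (simp add: card_cartesian_product)
    finally show ?thesis .
  qed
  also have "card ?B1 \<le> (n - q * M) * ((2 * t + 1) choose (k - 1))"
  proof -
    have "card ?B1 \<le> (\<Sum>x\<in>?Pad. card (?S1 x))" by (rule card_UN_le) simp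
    also have "\<dots> \<le> (\<Sum>x\<in>?Pad. (2 * t + 1) choose (k - 1))"
      by (rule sum_mono) (use S_bound[of x "{x}" t k for x] in simp)
    finally show ?thesis by simp
  qed
  also have "card ?B2 \<le> (n * c + q * (t * t)) * ((2 * t + 1) choose (k - 2))"
  proof -
    have "card ?B2 \<le> (\<Sum>p\<in>?BP. card (?S2 (fst p) (snd p)))" by (rule card_UN_le[OF fBP])
    also have "\<dots> \<le> (\<Sum>p\<in>?BP. (2 * t + 1) choose (k - 2))"
    proof (rule sum_mono)
      fix p assume "p \<in> ?BP"
      then have "fst p \<noteq> snd p" by auto
      then have "card {fst p, snd p} = 2" by simp
      then show "card (?S2 (fst p) (snd p)) \<le> (2 * t + 1) choose (k - 2)"
        using S_bound[of "fst p" "{fst p, snd p}" t k] by simp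
    qed
    also have "\<dots> = card ?BP * ((2 * t + 1) choose (k - 2))" by simp
    also have "\<dots> \<le> (n * c + q * (t * t)) * ((2 * t + 1) choose (k - 2))"
      by (intro mult_le_mono1 card_BP)
    finally show ?thesis .
  qed
  finally show ?thesis unfolding Cnt_def by simp
qed

end


lemma ratio_close:
  fixes a w x y d :: real
  assumes "0 \<le> a" "a \<le> w" "0 < w" "a \<le> x" "x \<le> a + d" "w \<le> y" "y \<le> w + d" "x \<le> y"
  shows "\<bar>x / y - a / w\<bar> \<le> d / w"
proof -
  have y: "0 < y" using assms by linarith
  have x0: "0 \<le> x" using assms by linarith
  have "x / y \<le> x / w" using x0 assms(3,6) by (intro divide_left_mono) auto
  also have "\<dots> \<le> (a + d) / w" using assms(3,5) by (intro divide_right_mono) auto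
  finally have 1: "x / y - a / w \<le> d / w" by (simp add: diff_divide_distrib add_divide_distrib)
  have "a / y \<le> x / y" using y assms(4) by (intro divide_right_mono) auto
  have "a * (y - w) \<le> y * d" by (rule mult_mono) (use assms in auto)
  then have "a * (y - w) / (w * y) \<le> y * d / (w * y)" using assms(3) y by (intro divide_right_mono) auto
  also have "y * d / (w * y) = d / w" using y by simp
  also have "a * (y - w) / (w * y) = a / w - a / y" using y assms(3) by (simp add: field_simps)
  finally have "a / w - a / y \<le> d / w" .
  then have 2: "a / w - x / y \<le> d / w" using \<open>a / y \<le> x / y\<close> by linarith
  show ?thesis using 1 2 by (simp add: abs_le_iff)
qed

context blowup begin

lemma tr_occ: "u < q \<Longrightarrow> J \<subseteq> {1..m} \<Longrightarrow> I \<in> Trans u J \<Longrightarrow>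
   occurrence pat (blow sg c q n) I = occurrence pat sg J"
  using occ_transfer by blast

lemma main_est:
  fixes pat :: "nat list"
  assumes k: "1 \<le> k" and Hc: "H * c \<le> t" and H1: "1 \<le> H" and q1: "1 \<le> q"
    and Wpos: "0 < Cnt m k H (\<lambda>_. True)"
  defines "X \<equiv> real (Cnt n k t (occurrence pat (blow sg c q n)))"
    and "Y \<equiv> real (Cnt n k t (\<lambda>_. True))"
    and "A \<equiv> real (Cnt m k H (occurrence pat sg))"
    and "W \<equiv> real (Cnt m k H (\<lambda>_. True))"
    and "D \<equiv> real (Cnt m k (t div c + 2) (\<lambda>_. True)) - real (Cnt m k H (\<lambda>_. True))"
    and "Q \<equiv> real (q * c ^ k)"
    and "B \<equiv> real ((n - q * M) * ((2 * t + 1) choose (k - 1)) + (n * c + q * (t * t)) * ((2 * t + 1) choose (k - 2)))"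
  shows "\<bar>X / Y - A / W\<bar> \<le> (Q * D + B) / (Q * W)"
proof -
  have Qpos: "0 < Q" unfolding Q_def using q1 cpos by simp
  have Hle: "H \<le> t div c + 2"
  proof -
    have "H \<le> t div c" using Hc cpos by (simp add: less_eq_div_iff_mult_less_eq)
    then show ?thesis by simp
  qed
  have trT: "\<And>u J I. u < q \<Longrightarrow> J \<subseteq> {1..m} \<Longrightarrow> I \<in> Trans u J \<Longrightarrow> True = True" by simp
  have LBo: "q * c ^ k * Cnt m k H (occurrence pat sg) \<le> Cnt n k t (occurrence pat (blow sg c q n))"
    by (rule LB[OF k Hc tr_occ])
  have LBt: "q * c ^ k * Cnt m k H (\<lambda>_. True) \<le> Cnt n k t (\<lambda>_. True)"
    by (rule LB[OF k Hc]) simp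
  have UBo: "Cnt n k t (occurrence pat (blow sg c q n)) \<le> q * c ^ k * Cnt m k (t div c + 2) (occurrence pat sg)
           + (n - q * M) * ((2 * t + 1) choose (k - 1)) + (n * c + q * (t * t)) * ((2 * t + 1) choose (k - 2))"
    by (rule UB[OF k tr_occ])
  have UBt: "Cnt n k t (\<lambda>_. True) \<le> q * c ^ k * Cnt m k (t div c + 2) (\<lambda>_. True)
           + (n - q * M) * ((2 * t + 1) choose (k - 1)) + (n * c + q * (t * t)) * ((2 * t + 1) choose (k - 2))"
    by (rule UB[OF k]) simp
  have band: "Cnt m k (t div c + 2) (occurrence pat sg) + Cnt m k H (\<lambda>_. True)
      \<le> Cnt m k H (occurrence pat sg) + Cnt m k (t div c + 2) (\<lambda>_. True)"
    by (rule Cnt_band[OF Hle])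
  have band2: "Cnt m k H (\<lambda>_. True) \<le> Cnt m k (t div c + 2) (\<lambda>_. True)" by (rule Cnt_mono_t[OF Hle])
  have AW: "Cnt m k H (occurrence pat sg) \<le> Cnt m k H (\<lambda>_. True)" by (rule Cnt_le_True)
  have XY: "Cnt n k t (occurrence pat (blow sg c q n)) \<le> Cnt n k t (\<lambda>_. True)" by (rule Cnt_le_True)
  let ?Ah = "real (Cnt m k (t div c + 2) (occurrence pat sg))"
  let ?Wh = "real (Cnt m k (t div c + 2) (\<lambda>_. True))"
  have r1: "Q * A \<le> X" using LBo unfolding Q_def A_def X_def by (simp only: of_nat_mult[symmetric] of_nat_le_iff)
  have r2: "Q * W \<le> Y" using LBt unfolding Q_def W_def Y_def by (simp only: of_nat_mult[symmetric] of_nat_le_iff)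
  have r3: "X \<le> Q * ?Ah + B" using UBo unfolding Q_def B_def X_def
    by (simp only: of_nat_mult[symmetric] of_nat_add[symmetric] of_nat_le_iff add.assoc)
  have r4: "Y \<le> Q * ?Wh + B" using UBt unfolding Q_def B_def Y_def
    by (simp only: of_nat_mult[symmetric] of_nat_add[symmetric] of_nat_le_iff add.assoc)
  have r5: "?Ah + W \<le> A + ?Wh" using band unfolding A_def W_def by (simp only: of_nat_add[symmetric] of_nat_le_iff)
  have r6: "A \<le> W" using AW unfolding A_def W_def by simp
  have r7: "X \<le> Y" using XY unfolding X_def Y_def by simp
  have D0: "0 \<le> D" using band2 unfolding D_def by simp
  have B0: "0 \<le> B" unfolding B_def by simp
  have "Q * ?Ah \<le> Q * (A + D)" using r5 Qpos unfolding D_def by (intro mult_left_mono) (auto simp: W_def)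
  have "Q * ?Wh = Q * (W + D)" unfolding D_def W_def by simp
  have "\<bar>X / Y - (Q * A) / (Q * W)\<bar> \<le> (Q * D + B) / (Q * W)"
  proof (rule ratio_close)
    show "0 \<le> Q * A" using Qpos unfolding A_def by simp
    show "Q * A \<le> Q * W" using r6 Qpos by simp
    show "0 < Q * W" using Qpos Wpos unfolding W_def by simp
    show "Q * A \<le> X" by (rule r1)
    show "X \<le> Q * A + (Q * D + B)" using r3 \<open>Q * ?Ah \<le> Q * (A + D)\<close> by (simp add: algebra_simps)
    show "Q * W \<le> Y" by (rule r2)
    show "Y \<le> Q * W + (Q * D + B)" using r4 \<open>Q * ?Wh = Q * (W + D)\<close> by (simp add: algebra_simps)
    show "X \<le> Y" by (rule r7)
  qed
  moreover have "(Q * A) / (Q * W) = A / W" using Qpos by simp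
  ultimately show ?thesis by simp
qed

end


lemma real_bound:
  fixes m H s c q t n i :: nat and D B W :: real
  assumes k2: "2 * (i + 2) \<le> H" and Hm: "2 * H \<le> m" and sH: "s + 2 \<le> 2 * H" and c1: "1 \<le> c" and q1: "1 \<le> q"
    and t1: "1 \<le> t" and ts: "t \<le> c * (s + 1)" and Hs: "H \<le> s + 2" and Ht: "H \<le> t"
    and nq: "n \<le> q * (c * m) + c * m"
    and D0: "0 \<le> D" and Dle: "D \<le> real (m * (s + 2 - H) * ((s + 2) choose i))"
    and B0: "0 \<le> B" and Ble: "B \<le> real ((n - q * (c * m)) * ((2 * t + 1) choose (i + 1)) + (n * c + q * (t * t)) * ((2 * t + 1) choose i))"
    and Wge: "real ((m + 1 - H) * ((H - 1) choose (i + 1))) \<le> W"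
  shows "(real (q * c ^ (i + 2)) * D + B) / (real (q * c ^ (i + 2)) * W)
     \<le> 12 * (2 * (real i + 2)) ^ (i + 1) * 6 ^ i * (real (s + 2 - H) / real H + 1 / real q + 1 / real H + real H / real m)"
proof -
  define L where "L = real H"
  define kk where "kk = 2 * (real i + 2)"
  define Q where "Q = real (q * c ^ (i + 2))"
  define Z0 where "Z0 = (real m / 2) * (L / kk) ^ (i + 1)"
  have L4: "4 \<le> L" using k2 unfolding L_def by simp
  have kk4: "4 \<le> kk" unfolding kk_def by simp
  have mpos: "0 < real m" using Hm k2 by simp
  have Z0pos: "0 < Z0" unfolding Z0_def using L4 kk4 mpos by simp
  have cr: "1 \<le> real c" "1 \<le> real q" using c1 q1 by simp_all
  have Qpos: "0 < Q" unfolding Q_def using c1 q1 by simp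
  have W1: "real m / 2 \<le> real (m + 1 - H)" using Hm by simp
  have hb: "i + 1 \<le> H - 1" using k2 by simp
  have W2: "((real (H - 1)) / real (i + 1)) ^ (i + 1) \<le> real ((H - 1) choose (i + 1))"
    using binomial_ge_n_over_k_pow_k[OF hb] by simp
  have W3: "L / kk \<le> real (H - 1) / real (i + 1)"
  proof -
    have "real (H - 1) = L - 1" using k2 unfolding L_def by simp
    moreover have "L * real (i + 1) \<le> (L - 1) * kk"
    proof -
      have "4 * real i \<le> L * real i" using L4 by (intro mult_right_mono) auto
      then show ?thesis using L4 unfolding kk_def by (simp add: algebra_simps)
    qed
    ultimately show ?thesis using kk4 by (simp add: divide_simps)
  qed
  have W4: "(L / kk) ^ (i + 1) \<le> real ((H - 1) choose (i + 1))"
    using power_mono[OF W3, of "i+1"] W2 L4 kk4 by simp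
  have WZ: "Z0 \<le> W"
  proof -
    have "Z0 \<le> real (m + 1 - H) * real ((H - 1) choose (i + 1))"
      unfolding Z0_def by (rule mult_mono[OF W1 W4]) (use L4 kk4 in auto)
    then show ?thesis using Wge by simp
  qed
  have Wpos: "0 < W" using WZ Z0pos by simp
  have "(s + 2) choose i \<le> (s + 2) ^ i" using binomial_le_pow[of i "s+2"] k2 Hs by simp
  then have "real ((s + 2) choose i) \<le> real (s + 2) ^ i" by (metis of_nat_le_iff of_nat_power)
  also have "\<dots> \<le> (2 * L) ^ i" using sH unfolding L_def by (intro power_mono) simp_all
  finally have Cb: "real ((s + 2) choose i) \<le> (2 * L) ^ i" .
  have "real (m * (s + 2 - H) * ((s + 2) choose i)) = (real m * real (s + 2 - H)) * real ((s + 2) choose i)" by simp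
  also have "\<dots> \<le> (real m * real (s + 2 - H)) * (2 * L) ^ i" by (rule mult_left_mono[OF Cb]) simp
  finally have Db: "D \<le> real m * real (s + 2 - H) * (2 * L) ^ i" using Dle by linarith
  have "s + 1 \<le> 2 * H" using sH by simp
  then have "c * (s + 1) \<le> c * (2 * H)" by (rule mult_le_mono2)
  then have "t \<le> c * (2 * H)" using ts by linarith
  then have "real t \<le> real (c * (2 * H))" by (simp only: of_nat_le_iff)
  then have tl2: "real t \<le> 2 * real c * L" unfolding L_def by simp
  have "1 * 1 \<le> real c * L" using cr L4 by (intro mult_mono) auto
  then have "1 \<le> real c * L" by simp
  then have tl: "real (2 * t + 1) \<le> 6 * real c * L" using tl2 by simp
  have bb: "real ((2 * t + 1) choose j) \<le> (6 * real c * L) ^ j" if "j \<le> 2 * t + 1" for j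
  proof -
    have "(2 * t + 1) choose j \<le> (2 * t + 1) ^ j" by (rule binomial_le_pow[OF that])
    then have "real ((2 * t + 1) choose j) \<le> real (2 * t + 1) ^ j" by (metis of_nat_le_iff of_nat_power)
    also have "\<dots> \<le> (6 * real c * L) ^ j" by (intro power_mono tl) simp
    finally show ?thesis .
  qed
  have ji: "i + 1 \<le> 2 * t + 1" "i \<le> 2 * t + 1" using k2 Ht by simp_all
  have "n - q * (c * m) \<le> c * m" using nq by linarith
  then have "real (n - q * (c * m)) \<le> real (c * m)" by (simp only: of_nat_le_iff)
  then have n1: "real (n - q * (c * m)) \<le> real c * real m" by simp
  have n2: "real n \<le> 2 * real q * real c * real m"
  proof -
    have "1 * (c * m) \<le> q * (c * m)" using q1 by (rule mult_le_mono1)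
    then have "n \<le> 2 * (q * (c * m))" using nq by linarith
    then have "real n \<le> real (2 * (q * (c * m)))" by (simp only: of_nat_le_iff)
    then show ?thesis by simp
  qed
  define G where "G = 6 * real c * L"
  have G0: "0 \<le> G" unfolding G_def using L4 by simp
  have Bb: "B \<le> real c * real m * G ^ (i + 1) + (2 * real q * real c * real m * real c + real q * (2 * real c * L) ^ 2) * G ^ i"
  proof -
    have "B \<le> real (n - q * (c * m)) * real ((2 * t + 1) choose (i + 1)) + (real n * real c + real q * (real t * real t)) * real ((2 * t + 1) choose i)"
      using Ble by simp
    also have "\<dots> \<le> (real c * real m) * G ^ (i + 1) + (2 * real q * real c * real m * real c + real q * (2 * real c * L) ^ 2) * G ^ i"
    proof (rule add_mono)
      show "real (n - q * (c * m)) * real ((2 * t + 1) choose (i + 1)) \<le> (real c * real m) * G ^ (i + 1)"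
        using bb[OF ji(1)] n1 G0 unfolding G_def by (intro mult_mono) auto
      have "real t * real t \<le> (2 * real c * L) * (2 * real c * L)" using tl2 cr L4 by (intro mult_mono) auto
      then have tt: "real t * real t \<le> (2 * real c * L) ^ 2" by (simp add: power2_eq_square)
      have "real n * real c + real q * (real t * real t) \<le> 2 * real q * real c * real m * real c + real q * (2 * real c * L) ^ 2"
        using n2 tt cr by (intro add_mono mult_right_mono mult_left_mono) auto
      then show "(real n * real c + real q * (real t * real t)) * real ((2 * t + 1) choose i) \<le> (2 * real q * real c * real m * real c + real q * (2 * real c * L) ^ 2) * G ^ i"
        using bb[OF ji(2)] G0 unfolding G_def by (intro mult_mono) auto
    qed
    finally show ?thesis by simp
  qed
  have split: "(Q * D + B) / (Q * W) = D / W + B / (Q * W)" using Qpos Wpos by (simp add: field_simps)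
  have t1r: "D / W \<le> (real m * real (s + 2 - H) * (2 * L) ^ i) / Z0"
    using Db D0 WZ Z0pos by (intro frac_le) auto
  have t1e: "(real m * real (s + 2 - H) * (2 * L) ^ i) / Z0 = 2 * 2 ^ i * kk ^ (i + 1) * (real (s + 2 - H) / L)"
    unfolding Z0_def using mpos L4 kk4 by (simp add: field_simps power_mult_distrib power_divide)
  have t2r: "B / (Q * W) \<le> (real c * real m * G ^ (i + 1) + (2 * real q * real c * real m * real c + real q * (2 * real c * L) ^ 2) * G ^ i) / (Q * Z0)"
    using Bb B0 WZ Z0pos Qpos by (intro frac_le) auto
  have t2e: "(real c * real m * G ^ (i + 1) + (2 * real q * real c * real m * real c + real q * (2 * real c * L) ^ 2) * G ^ i) / (Q * Z0)
     = 12 * kk ^ (i + 1) * 6 ^ i * (1 / real q) + 4 * kk ^ (i + 1) * 6 ^ i * (1 / L) + 8 * kk ^ (i + 1) * 6 ^ i * (L / real m)"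
    unfolding Z0_def Q_def G_def using mpos L4 kk4 cr by (simp add: field_simps power_mult_distrib power_divide power2_eq_square)
  have nn: "0 \<le> real (s + 2 - H) / L" "0 \<le> 1 / real q" "0 \<le> 1 / L" "0 \<le> L / real m" using L4 by auto
  have "(Q * D + B) / (Q * W) \<le> 2 * 2 ^ i * kk ^ (i + 1) * (real (s + 2 - H) / L)
      + (12 * kk ^ (i + 1) * 6 ^ i * (1 / real q) + 4 * kk ^ (i + 1) * 6 ^ i * (1 / L) + 8 * kk ^ (i + 1) * 6 ^ i * (L / real m))"
    using split t1r t1e t2r t2e by linarith
  also have "\<dots> \<le> 12 * kk ^ (i + 1) * 6 ^ i * (real (s + 2 - H) / L + 1 / real q + 1 / L + L / real m)"
  proof -
    define P where "P = kk ^ (i + 1) * 6 ^ i"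
    have P0: "0 \<le> P" unfolding P_def using kk4 by simp
    have "(2::real) * 2 ^ i \<le> 12 * 6 ^ i" using power_mono[of "2::real" 6 i] by (simp add: order_trans[of _ "6 ^ i" "6 * 6 ^ i"])
    then have e1: "2 * 2 ^ i * kk ^ (i + 1) * (real (s + 2 - H) / L) \<le> 12 * P * (real (s + 2 - H) / L)"
      using nn kk4 unfolding P_def by (intro mult_right_mono) (auto simp: mult.commute mult.left_commute)
    have e2: "4 * P * (1 / L) \<le> 12 * P * (1 / L)" using P0 nn by (intro mult_right_mono) auto
    have e3: "8 * P * (L / real m) \<le> 12 * P * (L / real m)" using P0 nn by (intro mult_right_mono) auto
    have e4: "12 * P * (real (s + 2 - H) / L + 1 / real q + 1 / L + L / real m)
       = 12 * P * (real (s + 2 - H) / L) + 12 * P * (1 / real q) + 12 * P * (1 / L) + 12 * P * (L / real m)"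
      by (simp only: distrib_left)
    have e5: "12 * kk ^ (i + 1) * 6 ^ i * (1 / real q) + 4 * kk ^ (i + 1) * 6 ^ i * (1 / L) + 8 * kk ^ (i + 1) * 6 ^ i * (L / real m)
       = 12 * P * (1 / real q) + 4 * P * (1 / L) + 8 * P * (L / real m)" unfolding P_def by (simp only: mult.assoc)
    have e6: "12 * kk ^ (i + 1) * 6 ^ i * (real (s + 2 - H) / L + 1 / real q + 1 / L + L / real m)
       = 12 * P * (real (s + 2 - H) / L + 1 / real q + 1 / L + L / real m)" unfolding P_def by (simp only: mult.assoc)
    show ?thesis unfolding e5 e6 e4 using e1 e2 e3 by linarith
  qed
  finally show ?thesis unfolding Q_def L_def kk_def by simp
qed



lemma blow_perm_gen:
  assumes "is_perm sg"
  shows "is_perm (blow sg c (n div (c * length sg)) n)"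
proof (cases "c * length sg = 0")
  case True
  then have "blow sg c (n div (c * length sg)) n = map Suc [0..<n]"
    unfolding blow_def bval_def True by simp
  moreover have "is_perm (map Suc [0..<n])" unfolding is_perm_def
    by (auto simp: distinct_map image_Suc_atLeastLessThan atLeastLessThanSuc_atLeastAtMost)
  ultimately show ?thesis by simp
next
  case False
  interpret blowup sg c "n div (c * length sg)" n
    by unfold_locales (use assms False in \<open>auto simp: mult.commute[of "n div _"]\<close>)
  show ?thesis by (rule blow_perm)
qed

lemma rho_one:
  assumes "length pat = 1" "1 \<le> f" "1 \<le> length sg"
  shows "rho f pat sg = 1"
proof -
  let ?t = "nat \<lfloor>f\<rfloor>"
  have t1: "1 \<le> ?t" using assms(2) by linarith
  have eq: "{I. I \<subseteq> {1..length sg} \<and> card I = 1 \<and> width I \<le> ?t \<and> occurrence pat sg I}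
      = {I. I \<subseteq> {1..length sg} \<and> card I = 1 \<and> width I \<le> ?t \<and> True}"
  proof (intro Collect_cong conj_cong refl)
    fix I assume I: "I \<subseteq> {1..length sg}" "card I = 1" "width I \<le> ?t"
    then obtain x where x: "I = {x}" using card_1_singleton_iff by (metis One_nat_def)
    show "occurrence pat sg I = True" unfolding occurrence_def Let_def using I assms(1) x by auto
  qed
  have "{1} \<in> {I. I \<subseteq> {1..length sg} \<and> card I = 1 \<and> width I \<le> ?t \<and> True}"
    using t1 assms(3) by (simp add: width_def)
  then have ne: "{I. I \<subseteq> {1..length sg} \<and> card I = 1 \<and> width I \<le> ?t \<and> True} \<noteq> {}" by blast
  have pos: "0 < Cnt (length sg) 1 ?t (\<lambda>_. True)" unfolding Cnt_def
    by (rule card_gt_0_iff[THEN iffD2, OF conjI[OF ne finite_Cset]])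
  have "rho f pat sg = real (Cnt (length sg) 1 ?t (occurrence pat sg)) / real (Cnt (length sg) 1 ?t (\<lambda>_. True))"
    using rho_Cnt[of f pat sg] assms by simp
  also have "\<dots> = 1"
  proof -
    have "Cnt (length sg) 1 ?t (occurrence pat sg) = Cnt (length sg) 1 ?t (\<lambda>_. True)"
      unfolding Cnt_def using eq by (simp only:)
    then show ?thesis using pos by simp
  qed
  finally show ?thesis .
qed

lemma step:
  fixes sg pat :: "nat list" and h T :: real and n i :: nat
  defines "m \<equiv> length sg" and "k \<equiv> length pat"
  defines "H \<equiv> nat \<lfloor>h\<rfloor>" and "t \<equiv> nat \<lfloor>T\<rfloor>"
  defines "c \<equiv> t div H"
  defines "q \<equiv> n div (c * m)"
  assumes perm: "is_perm sg" and k2: "2 \<le> k" and hk: "2 * real k \<le> h" and hm: "2 * h \<le> real m" and i1: "1 \<le> i"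
    and C1: "real (i + 2) * h \<le> T" and C2: "T * real (i + 1) * real m \<le> real n * h"
  shows "\<bar>rho T pat (blow sg c q n) - rho h pat sg\<bar>
     \<le> 12 * (2 * (real (k - 2) + 2)) ^ (k - 2 + 1) * 6 ^ (k - 2) * (5 / real (i + 1) + 3 / real H + h / real m)"
proof -
  have h0: "0 < h" using hk k2 by simp
  have Hh: "real H \<le> h" "h < real H + 1" unfolding H_def using h0 by linarith+
  have H2k: "2 * k \<le> H" using hk unfolding H_def by linarith
  have H4: "4 \<le> H" using H2k k2 by simp
  have "0 \<le> real (i + 2) * h" using h0 by simp
  then have T0: "0 \<le> T" using C1 by linarith
  have tT: "real t \<le> T" "T < real t + 1" unfolding t_def using T0 by linarith+
  have mpos: "0 < m" using hm h0 by simp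
  have "real (i + 2) * h = real (i + 1) * h + h" by (simp add: algebra_simps)
  also have "\<dots> \<ge> real (i + 1) * real H + 1"
  proof -
    have "real (i + 1) * real H \<le> real (i + 1) * h" using Hh by (intro mult_left_mono) auto
    moreover have "1 \<le> h" using Hh H4 by simp
    ultimately show ?thesis by linarith
  qed
  finally have "real (i + 1) * real H + 1 \<le> T" using C1 by linarith
  then have "real (i + 1) * real H < real t" using tT by linarith
  moreover have "real ((i + 1) * H) = real (i + 1) * real H" by (simp only: of_nat_mult)
  ultimately have "real ((i + 1) * H) < real t" by linarith
  then have tiH: "(i + 1) * H \<le> t" by (simp only: of_nat_less_iff)
  have cge: "i + 1 \<le> c" unfolding c_def using tiH H4 by (simp add: less_eq_div_iff_mult_less_eq)
  have c1: "1 \<le> c" using cge by simp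
  have Hc: "H * c \<le> t" unfolding c_def by (rule times_div_less_eq_dividend)
  have "H \<le> (i + 1) * H" by simp
  then have t1: "1 \<le> t" using tiH H4 by linarith
  define M where "M = c * m"
  have Mpos: "0 < M" unfolding M_def using c1 mpos by simp
  have "real (c * H) * real (i + 1) * real m \<le> T * real (i + 1) * real m"
  proof -
    have "real (H * c) \<le> real t" using Hc by (simp only: of_nat_le_iff)
    then have cHT: "real (c * H) \<le> T" using tT by (simp only: mult.commute[of c H])
    show ?thesis using cHT by (intro mult_right_mono) auto
  qed
  also have "\<dots> \<le> real n * h" by (rule C2)
  also have "\<dots> \<le> real n * (2 * real H)" using Hh H4 by (intro mult_left_mono) auto
  finally have "real (i + 1) * real M * real H \<le> real (2 * n) * real H" unfolding M_def by (simp add: algebra_simps)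
  then have "real (i + 1) * real M \<le> real (2 * n)" by (rule mult_right_le_imp_le) (use H4 in simp)
  then have "real ((i + 1) * M) \<le> real (2 * n)" by (simp only: of_nat_mult)
  then have iM: "(i + 1) * M \<le> 2 * n" by (simp only: of_nat_le_iff)
  have "M * (2 * ((i + 1) div 2)) \<le> M * (i + 1)" by (intro mult_le_mono2) simp
  then have "M * ((i + 1) div 2) \<le> n" using iM by (simp add: mult.commute)
  then have qi: "(i + 1) div 2 \<le> q" unfolding q_def M_def[symmetric] using Mpos
    by (simp add: less_eq_div_iff_mult_less_eq mult.commute)
  have q4: "i + 1 \<le> 4 * q" using qi i1 by linarith
  have q1: "1 \<le> q" using q4 i1 by linarith
  have qM: "q * M \<le> n" unfolding q_def M_def by (rule div_times_less_eq_dividend)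
  have nq: "n \<le> q * M + M"
  proof -
    have "n div M * M + n mod M = n" by (rule div_mult_mod_eq)
    moreover have "n mod M < M" using Mpos by simp
    ultimately show ?thesis unfolding q_def M_def by linarith
  qed
  define s where "s = t div c"
  have Hs: "H \<le> s" unfolding s_def using Hc c1 by (simp add: less_eq_div_iff_mult_less_eq)
  have sc: "s * c \<le> t" unfolding s_def by (rule div_times_less_eq_dividend)
  have ts: "t < c * H + H"
  proof -
    have "t div H * H + t mod H = t" by (rule div_mult_mod_eq)
    moreover have "t mod H < H" using H4 by simp
    ultimately show ?thesis unfolding c_def by linarith
  qed
  have e1: "(s - H) * c = s * c - H * c" by (rule diff_mult_distrib)
  have e2: "c * H = H * c" by (rule mult.commute)
  have e3: "H * c \<le> s * c" using Hs by (rule mult_le_mono1)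
  have "(s - H) * c < H" unfolding e1 using sc ts e2 e3 by linarith
  moreover have "(s - H) * (i + 1) \<le> (s - H) * c" using cge by (rule mult_le_mono2)
  ultimately have sH1: "(s - H) * (i + 1) < H" by linarith
  have "(s - H) * 2 \<le> (s - H) * (i + 1)" using i1 by (intro mult_le_mono2) simp
  then have "(s - H) * 2 < H" using sH1 by linarith
  then have sH: "s + 2 \<le> 2 * H" using H4 Hs by linarith
  have tsc: "t \<le> c * (s + 1)"
  proof -
    have "t div c * c + t mod c = t" by (rule div_mult_mod_eq)
    moreover have "t mod c < c" using c1 by simp
    moreover have "c * (s + 1) = s * c + c" by simp
    ultimately show ?thesis unfolding s_def by linarith
  qed
  interpret blowup sg c q n
    by unfold_locales (use perm c1 mpos qM in \<open>auto simp: m_def M_def\<close>)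
  have Wl: "(m + 1 - H) * ((H - 1) choose (k - 1)) \<le> Cnt m k H (\<lambda>_. True)"
    using Cnt_lower[of H k m] H4 k2 unfolding m_def by simp
  have Wpos: "0 < Cnt m k H (\<lambda>_. True)"
  proof -
    have "0 < m + 1 - H" using hm Hh by linarith
    moreover have "0 < (H - 1) choose (k - 1)" using H2k k2 by simp
    ultimately have "0 < (m + 1 - H) * ((H - 1) choose (k - 1))" by simp
    then show ?thesis using Wl by linarith
  qed
  note ME = main_est[of k H t pat, OF _ Hc _ q1 Wpos[unfolded m_def]]
  have est: "\<bar>rho T pat (blow sg c q n) - rho h pat sg\<bar> \<le>
     (real (q * c ^ k) * (real (Cnt m k (t div c + 2) (\<lambda>_. True)) - real (Cnt m k H (\<lambda>_. True)))
       + real ((n - q * (c * m)) * ((2 * t + 1) choose (k - 1)) + (n * c + q * (t * t)) * ((2 * t + 1) choose (k - 2))))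
     / (real (q * c ^ k) * real (Cnt m k H (\<lambda>_. True)))"
  proof -
    have r1: "rho T pat (blow sg c q n) = real (Cnt n k t (occurrence pat (blow sg c q n))) / real (Cnt n k t (\<lambda>_. True))"
      using rho_Cnt[OF T0, of pat "blow sg c q n"] blow_length unfolding t_def k_def by simp
    have r2: "rho h pat sg = real (Cnt m k H (occurrence pat sg)) / real (Cnt m k H (\<lambda>_. True))"
      using rho_Cnt[of h pat sg] h0 unfolding H_def k_def m_def by simp
    show ?thesis unfolding r1 r2 using ME k2 H4 unfolding m_def by simp
  qed
  define i' where "i' = k - 2"
  have ki: "k = i' + 2" unfolding i'_def using k2 by simp
  have band: "Cnt m k (s + 2) (\<lambda>_. True) \<le> Cnt m k H (\<lambda>_. True) + m * (s + 2 - H) * ((s + 2) choose (k - 2))"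
    using Cnt_band_bound[of H "s + 2" k m] H4 Hs k2 by simp
  have RB: "(real (q * c ^ (i' + 2)) * (real (Cnt m k (s + 2) (\<lambda>_. True)) - real (Cnt m k H (\<lambda>_. True)))
       + real ((n - q * (c * m)) * ((2 * t + 1) choose (i' + 1)) + (n * c + q * (t * t)) * ((2 * t + 1) choose i')))
     / (real (q * c ^ (i' + 2)) * real (Cnt m k H (\<lambda>_. True)))
     \<le> 12 * (2 * (real i' + 2)) ^ (i' + 1) * 6 ^ i' * (real (s + 2 - H) / real H + 1 / real q + 1 / real H + real H / real m)"
  proof (rule real_bound)
    show "2 * (i' + 2) \<le> H" using H2k ki by simp
    show "2 * H \<le> m" using hm Hh by linarith
    show "s + 2 \<le> 2 * H" by (rule sH)
    show "1 \<le> c" "1 \<le> q" "1 \<le> t" "t \<le> c * (s + 1)" by (fact c1, fact q1, fact t1, fact tsc)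
    show "H \<le> s + 2" using Hs by simp
    show "H \<le> t"
    proof -
      have a: "H * 1 \<le> H * c" using c1 by (rule mult_le_mono2)
      have b: "H * 1 = H" by (rule mult_1_right)
      from a b Hc show ?thesis by linarith
    qed
    show "n \<le> q * (c * m) + c * m" using nq unfolding M_def .
    show "0 \<le> real (Cnt m k (s + 2) (\<lambda>_. True)) - real (Cnt m k H (\<lambda>_. True))"
      using Cnt_mono_t[of H "s+2" m k "\<lambda>_. True"] Hs by simp
    show "real (Cnt m k (s + 2) (\<lambda>_. True)) - real (Cnt m k H (\<lambda>_. True)) \<le> real (m * (s + 2 - H) * ((s + 2) choose i'))"
    proof -
      have "real (Cnt m k (s + 2) (\<lambda>_. True)) \<le> real (Cnt m k H (\<lambda>_. True) + m * (s + 2 - H) * ((s + 2) choose (k - 2)))"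
        using band by (simp only: of_nat_le_iff)
      then have "real (Cnt m k (s + 2) (\<lambda>_. True)) \<le> real (Cnt m k H (\<lambda>_. True)) + real (m * (s + 2 - H) * ((s + 2) choose (k - 2)))"
        by (simp only: of_nat_add)
      then show ?thesis unfolding i'_def by linarith
    qed
    show "0 \<le> real ((n - q * (c * m)) * ((2 * t + 1) choose (i' + 1)) + (n * c + q * (t * t)) * ((2 * t + 1) choose i'))" by simp
    show "real ((n - q * (c * m)) * ((2 * t + 1) choose (i' + 1)) + (n * c + q * (t * t)) * ((2 * t + 1) choose i'))
        \<le> real ((n - q * (c * m)) * ((2 * t + 1) choose (i' + 1)) + (n * c + q * (t * t)) * ((2 * t + 1) choose i'))" by simp
    show "real ((m + 1 - H) * ((H - 1) choose (i' + 1))) \<le> real (Cnt m k H (\<lambda>_. True))"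
    proof -
      have "k - 1 = i' + 1" using ki by simp
      then have "(m + 1 - H) * ((H - 1) choose (i' + 1)) \<le> Cnt m k H (\<lambda>_. True)" using Wl by simp
      then show ?thesis by (simp only: of_nat_le_iff)
    qed
  qed
  define K where "K = 12 * (2 * (real (k - 2) + 2)) ^ (k - 2 + 1) * (6::real) ^ (k - 2)"
  have K0: "0 \<le> K" unfolding K_def by simp
  have "\<bar>rho T pat (blow sg c q n) - rho h pat sg\<bar> \<le> K * (real (s + 2 - H) / real H + 1 / real q + 1 / real H + real H / real m)"
  proof -
    have e: "k - 2 = i'" using ki by simp
    have KK: "K = 12 * (2 * (real i' + 2)) ^ (i' + 1) * 6 ^ i'" unfolding K_def e ..
    have e2: "q * c ^ (i' + 2) = q * c ^ k" "(2 * t + 1) choose (i' + 1) = (2 * t + 1) choose (k - 1)"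
      "(2 * t + 1) choose i' = (2 * t + 1) choose (k - 2)" using ki by simp_all
    note RB' = RB[unfolded e2 s_def]
    show ?thesis unfolding KK s_def by (rule order_trans[OF est RB'])
  qed
  also have "\<dots> \<le> K * (5 / real (i + 1) + 3 / real H + h / real m)"
  proof (rule mult_left_mono[OF _ K0])
    have Hp: "0 < real H" using H4 by simp
    have a: "real (s + 2 - H) / real H \<le> 1 / real (i + 1) + 2 / real H"
    proof -
      have "(s - H) * (i + 1) \<le> H" using sH1 by simp
      then have "real ((s - H) * (i + 1)) \<le> real H" by (simp only: of_nat_le_iff)
      then have "real (s - H) * real (i + 1) \<le> real H" by (simp only: of_nat_mult)
      then have "real (s - H) \<le> real H / real (i + 1)" by (simp add: field_simps)
      moreover have "real (s + 2 - H) = real (s - H) + 2" using Hs by simp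
      ultimately have "real (s + 2 - H) \<le> real H / real (i + 1) + 2" by simp
      then have "real (s + 2 - H) / real H \<le> (real H / real (i + 1) + 2) / real H" using Hp by (intro divide_right_mono) auto
      also have "\<dots> = 1 / real (i + 1) + 2 / real H" using Hp by (simp add: field_simps)
      finally show ?thesis .
    qed
    have b: "1 / real q \<le> 4 / real (i + 1)"
    proof -
      have "real (i + 1) \<le> real (4 * q)" using q4 by (simp only: of_nat_le_iff)
      then have "real (i + 1) \<le> 4 * real q" by simp
      then show ?thesis using q1 by (simp add: field_simps)
    qed
    have c: "real H / real m \<le> h / real m" using Hh mpos by (intro divide_right_mono) auto
    show "real (s + 2 - H) / real H + 1 / real q + 1 / real H + real H / real m \<le> 5 / real (i + 1) + 3 / real H + h / real m"
    proof -
      have f: "4 / real (i + 1) = 4 * (1 / real (i + 1))" "5 / real (i + 1) = 5 * (1 / real (i + 1))"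
        "2 / real H = 2 * (1 / real H)" "3 / real H = 3 * (1 / real H)" by simp_all
      show ?thesis using a b c unfolding f by linarith
    qed
  qed
  finally show ?thesis unfolding K_def .
qed



lemma choose_n_exists:
  fixes f :: "nat \<Rightarrow> real" and h :: real and m i :: nat
  assumes f: "scaling_function f" and h: "0 < h" and m: "0 < m"
  shows "\<exists>n. i \<le> n \<and> real (i + 2) * h \<le> f n \<and> f n * real (i + 1) * real m \<le> real n * h"
proof -
  have ftop: "filterlim f at_top sequentially" and fz: "(\<lambda>n. f n / real n) \<longlonglongrightarrow> 0"
    using f unfolding scaling_function_def by auto
  have e1: "eventually (\<lambda>n. i \<le> n) sequentially" by (rule eventually_ge_at_top)
  have e2: "eventually (\<lambda>n. real (i + 2) * h \<le> f n) sequentially"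
    using ftop unfolding filterlim_at_top by blast
  have pos: "0 < h / (real (i + 1) * real m)" using h m by simp
  have e3: "eventually (\<lambda>n. f n / real n < h / (real (i + 1) * real m)) sequentially"
    by (rule order_tendstoD(2)[OF fz pos])
  have e4: "eventually (\<lambda>n. 1 \<le> n) sequentially" by (rule eventually_ge_at_top)
  have "eventually (\<lambda>n. i \<le> n \<and> real (i + 2) * h \<le> f n \<and> f n * real (i + 1) * real m \<le> real n * h) sequentially"
  proof (rule eventually_mono[OF eventually_conj[OF e1 eventually_conj[OF e2 eventually_conj[OF e3 e4]]]])
    fix n assume a: "i \<le> n \<and> real (i + 2) * h \<le> f n \<and> f n / real n < h / (real (i + 1) * real m) \<and> 1 \<le> n"
    have np: "0 < real n" using a by simp
    have im: "0 < real (i + 1) * real m" using m by simp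
    have "f n < h / (real (i + 1) * real m) * real n" using a np by (simp add: divide_less_eq)
    then have "f n * (real (i + 1) * real m) < h * real n" using im by (simp add: less_divide_eq field_simps)
    then show "i \<le> n \<and> real (i + 2) * h \<le> f n \<and> f n * real (i + 1) * real m \<le> real n * h"
      using a by (simp add: algebra_simps)
  qed
  then obtain N where "\<forall>n\<ge>N. i \<le> n \<and> real (i + 2) * h \<le> f n \<and> f n * real (i + 1) * real m \<le> real n * h"
    unfolding eventually_sequentially by blast
  then show ?thesis by blast
qed

theorem mainTheorem5:
  fixes Xi :: "nat list \<Rightarrow> real" and f :: "nat \<Rightarrow> real"
  assumes "scale_limit Xi" and "scaling_function f"
  shows "\<exists>seq. converges_at_scale seq f Xi"
proof -
  obtain g sq where g: "scaling_function g" and cv: "converges_at_scale sq g Xi"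
    using assms(1) unfolding scale_limit_def by blast
  define mm where "mm i = length (sq i)" for i
  define hh where "hh i = g (mm i)" for i
  define nn where "nn i = (SOME n. i \<le> n \<and> (0 < hh i \<and> 0 < mm i \<longrightarrow>
      real (i + 2) * hh i \<le> f n \<and> f n * real (i + 1) * real (mm i) \<le> real n * hh i))" for i
  define HH where "HH i = nat \<lfloor>hh i\<rfloor>" for i
  define tt where "tt i = nat \<lfloor>f (nn i)\<rfloor>" for i
  define cc where "cc i = tt i div HH i" for i
  define qq where "qq i = nn i div (cc i * mm i)" for i
  define tau where "tau i = blow (sq i) (cc i) (qq i) (nn i)" for i
  have perm: "\<And>i. is_perm (sq i)" and mtop: "filterlim mm at_top sequentially"
    and lim: "\<And>pat. pat \<in> Perms \<Longrightarrow> (\<lambda>i. rho (hh i) pat (sq i)) \<longlonglongrightarrow> Xi pat"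
    using cv unfolding converges_at_scale_def mm_def hh_def by auto
  have gtop: "filterlim g at_top sequentially" and gz: "(\<lambda>n. g n / real n) \<longlonglongrightarrow> 0"
    and gpos: "\<And>n. 1 \<le> n \<Longrightarrow> 0 < g n"
    using g unfolding scaling_function_def by auto
  have htop: "filterlim hh at_top sequentially" unfolding hh_def by (rule filterlim_compose[OF gtop mtop])
  have hz: "(\<lambda>i. hh i / real (mm i)) \<longlonglongrightarrow> 0"
    unfolding hh_def using filterlim_compose[OF gz mtop] by simp
  have nn_spec: "i \<le> nn i \<and> (0 < hh i \<and> 0 < mm i \<longrightarrow>
      real (i + 2) * hh i \<le> f (nn i) \<and> f (nn i) * real (i + 1) * real (mm i) \<le> real (nn i) * hh i)" for i
  proof -
    have "\<exists>n. i \<le> n \<and> (0 < hh i \<and> 0 < mm i \<longrightarrow>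
      real (i + 2) * hh i \<le> f n \<and> f n * real (i + 1) * real (mm i) \<le> real n * hh i)"
    proof (cases "0 < hh i \<and> 0 < mm i")
      case True
      then show ?thesis using choose_n_exists[OF assms(2), of "hh i" "mm i" i] by auto
    next
      case False
      then show ?thesis by auto
    qed
    then show ?thesis unfolding nn_def by (rule someI_ex)
  qed
  have perm_tau: "is_perm (tau i)" for i
    unfolding tau_def qq_def using blow_perm_gen[OF perm[of i]] unfolding mm_def by simp
  have len_tau: "length (tau i) = nn i" for i unfolding tau_def by (simp add: blow_def)
  have tau_top: "filterlim (\<lambda>i. length (tau i)) at_top sequentially"
  proof (rule filterlim_at_top_mono[OF filterlim_ident])
    show "eventually (\<lambda>i. i \<le> length (tau i)) sequentially" using nn_spec len_tau by simp
  qed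
  have ev_mpos: "eventually (\<lambda>i. 1 \<le> mm i) sequentially" using mtop unfolding filterlim_at_top by auto
  have ev_h: "eventually (\<lambda>i. Z \<le> hh i) sequentially" for Z using htop unfolding filterlim_at_top by auto
  have ev_i: "eventually (\<lambda>i. 1 \<le> i) sequentially" by (rule eventually_ge_at_top)
  have ev_hm: "eventually (\<lambda>i. 2 * hh i \<le> real (mm i)) sequentially"
  proof -
    have "eventually (\<lambda>i. hh i / real (mm i) < 1 / 2) sequentially" by (rule order_tendstoD(2)[OF hz]) simp
    then show ?thesis using ev_mpos by eventually_elim (simp add: divide_less_eq)
  qed
  have conv: "(\<lambda>i. rho (f (length (tau i))) pat (tau i)) \<longlonglongrightarrow> Xi pat" if pat: "pat \<in> Perms" for pat
  proof -
    have k1: "1 \<le> length pat" using pat unfolding Perms_def by simp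
    have diff: "(\<lambda>i. rho (f (nn i)) pat (tau i) - rho (hh i) pat (sq i)) \<longlonglongrightarrow> 0"
    proof (cases "length pat = 1")
      case True
      have "eventually (\<lambda>i. rho (f (nn i)) pat (tau i) - rho (hh i) pat (sq i) = 0) sequentially"
        using ev_mpos ev_h[of 1] ev_i
      proof eventually_elim
        case (elim i)
        then have hp: "0 < hh i" "0 < mm i" by auto
        then have "real (i + 2) * hh i \<le> f (nn i)" using nn_spec by blast
        moreover have "1 * 1 \<le> real (i + 2) * hh i" using elim by (intro mult_mono) auto
        ultimately have f1: "1 \<le> f (nn i)" by simp
        have n1: "1 \<le> length (tau i)" using len_tau nn_spec[of i] elim by simp
        have "rho (f (nn i)) pat (tau i) = 1" by (rule rho_one[OF True f1 n1])
        moreover have "rho (hh i) pat (sq i) = 1" using rho_one[OF True] elim unfolding mm_def by simp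
        ultimately show ?case by simp
      qed
      then show ?thesis by (rule tendsto_eventually)
    next
      case False
      then have k2: "2 \<le> length pat" using k1 by simp
      define k where "k = length pat"
      define K where "K = 12 * (2 * (real (k - 2) + 2)) ^ (k - 2 + 1) * (6::real) ^ (k - 2)"
      have bnd: "eventually (\<lambda>i. norm (rho (f (nn i)) pat (tau i) - rho (hh i) pat (sq i))
          \<le> K * (5 / real (i + 1) + 3 / real (HH i) + hh i / real (mm i))) sequentially"
        using ev_mpos ev_h[of "2 * real k"] ev_i ev_hm
      proof eventually_elim
        case (elim i)
        have hp: "0 < hh i" using elim k2 unfolding k_def by simp
        have mp: "0 < mm i" using elim by simp
        have C: "real (i + 2) * hh i \<le> f (nn i)" "f (nn i) * real (i + 1) * real (mm i) \<le> real (nn i) * hh i"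
          using nn_spec[of i] hp mp by auto
        have "\<bar>rho (f (nn i)) pat (blow (sq i) (nat \<lfloor>f (nn i)\<rfloor> div nat \<lfloor>hh i\<rfloor>)
              (nn i div (nat \<lfloor>f (nn i)\<rfloor> div nat \<lfloor>hh i\<rfloor> * length (sq i))) (nn i)) - rho (hh i) pat (sq i)\<bar>
          \<le> 12 * (2 * (real (length pat - 2) + 2)) ^ (length pat - 2 + 1) * 6 ^ (length pat - 2) *
            (5 / real (i + 1) + 3 / real (nat \<lfloor>hh i\<rfloor>) + hh i / real (length (sq i)))"
          by (rule step[OF perm k2]) (use elim C in \<open>auto simp: k_def mm_def\<close>)
        then show ?case unfolding tau_def cc_def qq_def tt_def HH_def K_def k_def mm_def by simp
      qed
      have z: "(\<lambda>i. K * (5 / real (i + 1) + 3 / real (HH i) + hh i / real (mm i))) \<longlonglongrightarrow> 0"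
      proof -
        have a: "(\<lambda>i. 5 / real (i + 1)) \<longlonglongrightarrow> 0"
          using tendsto_mult_right_zero[OF LIMSEQ_inverse_real_of_nat, of 5] by (simp add: divide_inverse)
        have Htop: "filterlim (\<lambda>i. real (HH i)) at_top sequentially"
        proof (rule filterlim_at_top_mono)
          show "filterlim (\<lambda>i. -1 + hh i) at_top sequentially"
            by (rule filterlim_tendsto_add_at_top[OF tendsto_const htop])
          show "eventually (\<lambda>i. -1 + hh i \<le> real (HH i)) sequentially"
            unfolding HH_def by (intro always_eventually allI) linarith
        qed
        have b: "(\<lambda>i. 3 / real (HH i)) \<longlonglongrightarrow> 0"
          by (rule tendsto_divide_0[OF tendsto_const filterlim_at_top_imp_at_infinity[OF Htop]])
        have "(\<lambda>i. 5 / real (i + 1) + 3 / real (HH i) + hh i / real (mm i)) \<longlonglongrightarrow> 0 + 0 + 0"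
          by (intro tendsto_add a b hz)
        then show ?thesis using tendsto_mult_right_zero by fastforce
      qed
      show ?thesis by (rule Lim_null_comparison[OF bnd z])
    qed
    have "(\<lambda>i. (rho (f (nn i)) pat (tau i) - rho (hh i) pat (sq i)) + rho (hh i) pat (sq i)) \<longlonglongrightarrow> 0 + Xi pat"
      by (intro tendsto_add diff lim[OF pat])
    then show ?thesis using len_tau by simp
  qed
  have "converges_at_scale tau f Xi"
    unfolding converges_at_scale_def using perm_tau tau_top conv by blast
  then show ?thesis by blast
qed


end
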